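(* Let $G$ be an expansion of a weakly 4-connected graph. Then $G$ is 3-connected, and if $G$ is not a prism, then for every non-trivial separation $(A,B)$ of $G$ of order three, exactly one of $(A,B)$, $(B,A)$ is degenerate.
   Context: Graphs are finite and simple. A separation of $G$ is a pair $(A,B)$ of subsets of $V(G)$ with $A\cup B=V(G)$ and no edge between $A-B$ and $B-A$; its order is $|A\cap B|$; it is non-trivial if $A\neq V(G)\neq B$. A graph is weakly 4-connected if it is 3-connected, has at least five vertices, and for every separation $(A,B)$ of order at most three one of $G[A]$, $G[B]$ has at most four edges. A prism is a graph with exactly six vertices whose complement is a 6-cycle. Splitting: for a vertex $v$ of degree at least 4 and a partition $(N_1,N_2)$ of its neighbours with $|N_1|,|N_2|\ge2$, replace $v$ by adjacent new vertices $v_1,v_2$ with $v_i$ adjacent to $N_i$. An expansion of a graph is a graph obtained from it by a (possibly empty) sequence of splits. A non-trivial separation $(A,B)$ of $G$ of order three is degenerate if the vertices of $A\cap B$ can be numbered $v_1,v_2,v_3$ so that either (1) $|A-B|=1$ and $A\cap B$ is independent, or (2) there is a triangle $u_1u_2u_3$ in $G[A]$ such that for $i=1,2,3$, $u_i$ and $v_i$ are adjacent or equal, $A\subseteq\{u_1,u_2,u_3,v_1,v_2,v_3\}$, and every edge of $G[A]$ is of the form $u_iv_i$ or $u_iu_j$. *)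

theory Defs
  imports Main
begin

definition graph :: "'a set \<Rightarrow> 'a set set \<Rightarrow> bool" where
  "graph V E \<longleftrightarrow> finite V \<and> (\<forall>e\<in>E. e \<subseteq> V \<and> card e = 2)"

definition adj :: "'a set set \<Rightarrow> 'a \<Rightarrow> 'a \<Rightarrow> bool" where
  "adj E u v \<longleftrightarrow> {u, v} \<in> E"

definition nbrs :: "'a set set \<Rightarrow> 'a \<Rightarrow> 'a set" where
  "nbrs E v = {u. adj E v u}"

definition edges_in :: "'a set set \<Rightarrow> 'a set \<Rightarrow> nat" where
  "edges_in E A = card {e\<in>E. e \<subseteq> A}"

definition separation :: "'a set \<Rightarrow> 'a set set \<Rightarrow> 'a set \<Rightarrow> 'a set \<Rightarrow> bool" where
  "separation V E A B \<longleftrightarrow> A \<union> B = V \<and>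
     (\<forall>x\<in>A - B. \<forall>y\<in>B - A. \<not> adj E x y)"

definition sep_order :: "'a set \<Rightarrow> 'a set \<Rightarrow> nat" where
  "sep_order A B = card (A \<inter> B)"

definition nontrivial_sep :: "'a set \<Rightarrow> 'a set \<Rightarrow> 'a set \<Rightarrow> bool" where
  "nontrivial_sep V A B \<longleftrightarrow> A \<noteq> V \<and> B \<noteq> V"

definition three_connected :: "'a set \<Rightarrow> 'a set set \<Rightarrow> bool" where
  "three_connected V E \<longleftrightarrow> graph V E \<and> card V \<ge> 4 \<and>
     (\<forall>A B. separation V E A B \<and> nontrivial_sep V A B \<longrightarrow> sep_order A B \<ge> 3)"

definition weakly_4_connected :: "'a set \<Rightarrow> 'a set set \<Rightarrow> bool" where
  "weakly_4_connected V E \<longleftrightarrow> three_connected V E \<and> card V \<ge> 5 \<and>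
     (\<forall>A B. separation V E A B \<and> sep_order A B \<le> 3 \<longrightarrow>
        edges_in E A \<le> 4 \<or> edges_in E B \<le> 4)"

text \<open>Prism: exactly six vertices, complement is a 6-cycle.\<close>
definition prism :: "'a set \<Rightarrow> 'a set set \<Rightarrow> bool" where
  "prism V E \<longleftrightarrow> graph V E \<and> card V = 6 \<and>
     (\<exists>f :: nat \<Rightarrow> 'a. bij_betw f {0..<6} V \<and>
        (\<forall>i<6. \<forall>j<6. i \<noteq> j \<longrightarrow>
           (\<not> adj E (f i) (f j) \<longleftrightarrow> (j = (i + 1) mod 6 \<or> i = (j + 1) mod 6))))"

definition split_step :: "'a set \<Rightarrow> 'a set set \<Rightarrow> 'a set \<Rightarrow> 'a set set \<Rightarrow> bool" where
  "split_step V E V' E' \<longleftrightarrow> (\<exists>v N1 N2 v1 v2.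
     v \<in> V \<and> card (nbrs E v) \<ge> 4 \<and>
     N1 \<union> N2 = nbrs E v \<and> N1 \<inter> N2 = {} \<and> card N1 \<ge> 2 \<and> card N2 \<ge> 2 \<and>
     v1 \<noteq> v2 \<and> v1 \<notin> V - {v} \<and> v2 \<notin> V - {v} \<and>
     V' = (V - {v}) \<union> {v1, v2} \<and>
     E' = {e\<in>E. v \<notin> e} \<union> {{v1, v2}} \<union> {{v1, u} | u. u \<in> N1} \<union> {{v2, u} | u. u \<in> N2})"

definition expansion :: "'a set \<Rightarrow> 'a set set \<Rightarrow> 'a set \<Rightarrow> 'a set set \<Rightarrow> bool" where
  "expansion V E V' E' \<longleftrightarrow>
     (\<lambda>(X, F) (Y, H). split_step X F Y H)\<^sup>*\<^sup>* (V, E) (V', E')"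

definition degenerate :: "'a set \<Rightarrow> 'a set set \<Rightarrow> 'a set \<Rightarrow> 'a set \<Rightarrow> bool" where
  "degenerate V E A B \<longleftrightarrow> separation V E A B \<and> nontrivial_sep V A B \<and> sep_order A B = 3 \<and>
    (\<exists>v1 v2 v3. A \<inter> B = {v1, v2, v3} \<and> v1 \<noteq> v2 \<and> v1 \<noteq> v3 \<and> v2 \<noteq> v3 \<and>
      ((card (A - B) = 1 \<and> (\<forall>x\<in>A \<inter> B. \<forall>y\<in>A \<inter> B. \<not> adj E x y)) \<or>
       (\<exists>u1 u2 u3. u1 \<in> A \<and> u2 \<in> A \<and> u3 \<in> A \<and>
          adj E u1 u2 \<and> adj E u2 u3 \<and> adj E u1 u3 \<and>
          (u1 = v1 \<or> adj E u1 v1) \<and> (u2 = v2 \<or> adj E u2 v2) \<and> (u3 = v3 \<or> adj E u3 v3) \<and>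
          A \<subseteq> {u1, u2, u3, v1, v2, v3} \<and>
          (\<forall>e\<in>E. e \<subseteq> A \<longrightarrow>
             e \<in> {{u1, v1}, {u2, v2}, {u3, v3}, {u1, u2}, {u2, u3}, {u1, u3}}))))"

end

theory Submission
  imports Defs
begin

lemma adj_sym: "adj E u v = adj E v u"
  by (simp add: adj_def insert_commute)

lemma adj_ne: "graph V E \<Longrightarrow> adj E u v \<Longrightarrow> u \<noteq> v"
  unfolding graph_def adj_def by fastforce

lemma adj_V: "graph V E \<Longrightarrow> adj E u v \<Longrightarrow> u \<in> V \<and> v \<in> V"
  unfolding graph_def adj_def by blast

lemma edge_2: "graph V E \<Longrightarrow> e \<in> E \<Longrightarrow> \<exists>x y. x \<noteq> y \<and> e = {x,y}"
  unfolding graph_def by (metis card_2_iff)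

lemma edge_other: assumes "graph V E" "e \<in> E" "x \<in> e" shows "\<exists>y. y \<noteq> x \<and> e = {x,y}"
proof -
  obtain p q where pq: "p \<noteq> q" "e = {p,q}" using edge_2[OF assms(1,2)] by blast
  show ?thesis
  proof (cases "x = p")
    case True then show ?thesis using pq by (intro exI[of _ q]) simp
  next
    case False then have "x = q" using pq assms(3) by blast
    then show ?thesis using pq by (intro exI[of _ p]) (simp add: insert_commute)
  qed
qed

lemma nbrs_sub: "graph V E \<Longrightarrow> nbrs E v \<subseteq> V"
  unfolding nbrs_def using adj_V by fastforce

lemma finE: "graph V E \<Longrightarrow> finite E"
  unfolding graph_def by (meson finite_Pow_iff finite_subset subsetI PowI)

lemma handshake:
  assumes "finite F" "finite S"
  shows "(\<Sum>s\<in>S. card {e\<in>F. s\<in>e}) = (\<Sum>e\<in>F. card (e \<inter> S))"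
proof -
  have "(\<Sum>s\<in>S. card {e\<in>F. s\<in>e}) = (\<Sum>s\<in>S. \<Sum>e\<in>F. if s\<in>e then 1 else 0)"
    using assms by (simp add: sum.If_cases Int_def)
  also have "\<dots> = (\<Sum>e\<in>F. \<Sum>s\<in>S. if s\<in>e then 1 else 0)" by (rule sum.swap)
  also have "\<dots> = (\<Sum>e\<in>F. card (e \<inter> S))"
    using assms by (simp add: sum.If_cases Int_commute)
  finally show ?thesis .
qed

lemma deg_card:
  assumes "graph V E"
  shows "card {e\<in>E. s\<in>e} = card (nbrs E s)"
proof -
  have "bij_betw (\<lambda>y. {s,y}) (nbrs E s) {e\<in>E. s\<in>e}"
  proof (rule bij_betwI')
    fix x y assume "x \<in> nbrs E s" "y \<in> nbrs E s"
    then show "({s, x} = {s, y}) = (x = y)" using adj_ne[OF assms] unfolding nbrs_def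
      by (metis doubleton_eq_iff)
  next
    fix x assume "x \<in> nbrs E s" then show "{s,x} \<in> {e\<in>E. s\<in>e}" unfolding nbrs_def adj_def by auto
  next
    fix e assume "e \<in> {e\<in>E. s\<in>e}"
    then obtain x y where "x\<noteq>y" "e = {x,y}" "e\<in>E" "s \<in> e" using edge_2[OF assms] by blast
    then show "\<exists>y\<in>nbrs E s. e = {s, y}" unfolding nbrs_def adj_def
      by (metis insert_commute emptyE insertE mem_Collect_eq)
  qed
  then show ?thesis by (simp add: bij_betw_same_card)
qed


lemma tc_graph: "three_connected V E \<Longrightarrow> graph V E"
  unfolding three_connected_def by simp

lemma graph_fin: "graph V E \<Longrightarrow> finite V"
  unfolding graph_def by simp

lemma sep_U: "separation V E A B \<Longrightarrow> A \<union> B = V"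
  unfolding separation_def by simp

lemma sep_na: "separation V E A B \<Longrightarrow> x \<in> A - B \<Longrightarrow> y \<in> B - A \<Longrightarrow> \<not> adj E x y"
  unfolding separation_def by simp

lemma sep_sub: "separation V E A B \<Longrightarrow> A \<subseteq> V \<and> B \<subseteq> V"
  using sep_U by (metis Un_upper1 Un_upper2)

lemma sep_nb: "separation V E A B \<Longrightarrow> graph V E \<Longrightarrow> s \<in> A - B \<Longrightarrow> adj E s y \<Longrightarrow> y \<in> A"
proof (rule ccontr)
  assume a: "separation V E A B" "graph V E" "s \<in> A - B" "adj E s y" "y \<notin> A"
  have "y \<in> V" using adj_V a(2,4) by metis
  then have "y \<in> B - A" using sep_U[OF a(1)] a(5) by auto
  then show False using sep_na[OF a(1,3)] a(4) by metis
qed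

lemma nontriv_ne: "separation V E A B \<Longrightarrow> nontrivial_sep V A B \<Longrightarrow> A - B \<noteq> {} \<and> B - A \<noteq> {}"
  unfolding separation_def nontrivial_sep_def by (metis Diff_eq_empty_iff Un_absorb1 Un_absorb2)

lemma tc_sep: "three_connected V E \<Longrightarrow> separation V E A B \<Longrightarrow> nontrivial_sep V A B \<Longrightarrow> 3 \<le> sep_order A B"
  unfolding three_connected_def by blast

lemma tc_deg:
  assumes tc: "three_connected V E" and v: "v \<in> V"
  shows "3 \<le> card (nbrs E v)"
proof (rule ccontr)
  assume c: "\<not> 3 \<le> card (nbrs E v)"
  have g: "graph V E" using tc tc_graph by blast
  let ?N = "nbrs E v"
  have NV: "?N \<subseteq> V" using nbrs_sub[OF g] .
  have fN: "finite ?N" using NV graph_fin[OF g] finite_subset by blast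
  have vN: "v \<notin> ?N" using adj_ne[OF g] unfolding nbrs_def by blast
  let ?A = "insert v ?N" and ?B = "V - {v}"
  have sep: "separation V E ?A ?B"
    unfolding separation_def
  proof (intro conjI ballI)
    show "?A \<union> ?B = V" using v NV by auto
  next
    fix x y assume "x \<in> ?A - ?B" "y \<in> ?B - ?A"
    then have "x = v" "y \<notin> ?N" using NV by auto
    then show "\<not> adj E x y" unfolding nbrs_def by simp
  qed
  have cA: "card ?A \<le> 3" using c fN vN by simp
  have cV: "card V \<ge> 4" using tc unfolding three_connected_def by simp
  have "?A \<noteq> V" using cA cV by auto
  then have nt: "nontrivial_sep V ?A ?B" unfolding nontrivial_sep_def using v by auto
  have "?A \<inter> ?B = ?N" using vN NV by auto
  then have "sep_order ?A ?B \<le> 2" using c unfolding sep_order_def by simp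
  then show False using tc_sep[OF tc sep nt] by simp
qed

lemma tc_cover:
  assumes tc: "three_connected V E" and sep: "separation V E A B" and nt: "nontrivial_sep V A B"
    and o3: "card (A \<inter> B) = 3" and x: "x \<in> A \<inter> B"
  shows "\<exists>s\<in>A - B. adj E x s"
proof (rule ccontr)
  assume c: "\<not> (\<exists>s\<in>A - B. adj E x s)"
  have g: "graph V E" using tc tc_graph by blast
  have sep2: "separation V E (A - {x}) B"
    unfolding separation_def
  proof (intro conjI ballI)
    show "(A - {x}) \<union> B = V" using sep_U[OF sep] x by auto
  next
    fix y z assume y: "y \<in> (A - {x}) - B" and z: "z \<in> B - (A - {x})"
    show "\<not> adj E y z"
    proof (cases "z = x")
      case True then show ?thesis using c y by (auto simp: adj_sym)
    next
      case False then have "z \<in> B - A" using z by auto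
      then show ?thesis using sep_na[OF sep] y by auto
    qed
  qed
  have nt2: "nontrivial_sep V (A - {x}) B" using nt x sep_sub[OF sep] unfolding nontrivial_sep_def by auto
  have "(A - {x}) \<inter> B = (A \<inter> B) - {x}" by auto
  then have "sep_order (A - {x}) B = 2" using o3 x unfolding sep_order_def
    by (metis card_Diff_singleton_if card.infinite diff_Suc_1 eval_nat_numeral(3) zero_neq_numeral)
  then show False using tc_sep[OF tc sep2 nt2] by simp
qed

lemma edge_at_in:
  assumes g: "graph V E" and sep: "separation V E A B" and s: "s \<in> A - B"
  shows "{e\<in>{e\<in>E. e \<subseteq> A}. s\<in>e} = {e\<in>E. s\<in>e}"
proof -
  have "e \<subseteq> A" if eE: "e \<in> E" and se: "s \<in> e" for e
  proof -
    obtain z where "e = {s,z}" using edge_other[OF g eE se] by blast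
    then have "adj E s z" using eE unfolding adj_def by simp
    then have "z \<in> A" using sep_nb[OF sep g s] by simp
    then show ?thesis using \<open>e = {s,z}\<close> s by auto
  qed
  then show ?thesis by auto
qed

lemma side_ineq:
  assumes tc: "three_connected V E" and sep: "separation V E A B"
  shows "3 * card (A - B) + (\<Sum>x\<in>A\<inter>B. card {e\<in>{e\<in>E. e \<subseteq> A}. x\<in>e}) \<le> 2 * edges_in E A"
proof -
  have g: "graph V E" using tc tc_graph by blast
  define F where "F = {e\<in>E. e \<subseteq> A}"
  have fF: "finite F" unfolding F_def using finE[OF g] by simp
  have fA: "finite A" using sep_sub[OF sep] graph_fin[OF g] finite_subset by blast
  have c2: "card (e \<inter> (A - B)) + card (e \<inter> (A \<inter> B)) = 2" if "e \<in> F" for e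
  proof -
    have "e \<subseteq> A" "card e = 2" using that g unfolding F_def graph_def by auto
    moreover have "e = (e \<inter> (A - B)) \<union> (e \<inter> (A \<inter> B))" using \<open>e \<subseteq> A\<close> by auto
    moreover have "finite e" using \<open>card e = 2\<close> card.infinite by fastforce
    ultimately show ?thesis by (metis card_Un_disjoint Diff_disjoint Int_Diff_disjoint finite_Int inf_assoc inf_commute inf_left_commute)
  qed
  have sumeq: "(\<Sum>e\<in>F. card (e \<inter> (A - B))) + (\<Sum>e\<in>F. card (e \<inter> (A \<inter> B))) = 2 * card F"
    using c2 by (simp add: sum.distrib[symmetric])
  have hs1: "(\<Sum>s\<in>A-B. card {e\<in>F. s\<in>e}) = (\<Sum>e\<in>F. card (e \<inter> (A - B)))"
    using handshake[OF fF] fA by simp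
  have hs2: "(\<Sum>s\<in>A\<inter>B. card {e\<in>F. s\<in>e}) = (\<Sum>e\<in>F. card (e \<inter> (A \<inter> B)))"
    using handshake[OF fF] fA by simp
  have ge: "3 \<le> card {e\<in>F. s\<in>e}" if "s \<in> A - B" for s
  proof -
    have "card {e\<in>F. s\<in>e} = card (nbrs E s)"
      unfolding F_def using edge_at_in[OF g sep that] deg_card[OF g] by simp
    moreover have "s \<in> V" using that sep_sub[OF sep] by auto
    ultimately show ?thesis using tc_deg[OF tc] by simp
  qed
  have "3 * card (A - B) \<le> (\<Sum>s\<in>A-B. card {e\<in>F. s\<in>e})"
    using sum_mono[of "A-B" "\<lambda>_. 3" "\<lambda>s. card {e\<in>F. s\<in>e}"] ge by simp
  then show ?thesis using sumeq hs1 hs2 unfolding edges_in_def F_def by linarith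
qed

lemma cover_sum:
  assumes tc: "three_connected V E" and sep: "separation V E A B" and nt: "nontrivial_sep V A B"
    and o3: "card (A \<inter> B) = 3"
  shows "3 \<le> (\<Sum>x\<in>A\<inter>B. card {e\<in>{e\<in>E. e \<subseteq> A}. x\<in>e})"
proof -
  have g: "graph V E" using tc tc_graph by blast
  have fE: "finite E" using finE[OF g] .
  have "1 \<le> card {e\<in>{e\<in>E. e \<subseteq> A}. x\<in>e}" if x: "x \<in> A \<inter> B" for x
  proof -
    obtain s where s: "s \<in> A - B" "adj E x s" using tc_cover[OF tc sep nt o3 x] by blast
    then have "{x,s} \<in> {e\<in>{e\<in>E. e \<subseteq> A}. x\<in>e}" using x unfolding adj_def by auto
    then have ne: "{e\<in>{e\<in>E. e \<subseteq> A}. x\<in>e} \<noteq> {}" by blast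
    have fin: "finite {e\<in>{e\<in>E. e \<subseteq> A}. x\<in>e}" using fE by simp
    show ?thesis using card_gt_0_iff[of "{e\<in>{e\<in>E. e \<subseteq> A}. x\<in>e}"] ne fin by linarith
  qed
  then have "(\<Sum>x\<in>A\<inter>B. 1) \<le> (\<Sum>x\<in>A\<inter>B. card {e\<in>{e\<in>E. e \<subseteq> A}. x\<in>e})" by (rule sum_mono)
  then show ?thesis using o3 by simp
qed

lemma card_le_3: "card {a,b,c} \<le> 3"
  by (simp add: card_insert_if)

lemma B1_case2:
  assumes g: "graph V E" and X: "A \<inter> B = {v1,v2,v3}" "v1 \<noteq> v2" "v1 \<noteq> v3" "v2 \<noteq> v3"
    and u: "u1 \<in> A" "u2 \<in> A" "u3 \<in> A" "adj E u1 u2" "adj E u2 u3" "adj E u1 u3"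
    and cov: "A \<subseteq> {u1, u2, u3, v1, v2, v3}"
    and ed: "\<forall>e\<in>E. e \<subseteq> A \<longrightarrow> e \<in> {{u1, v1}, {u2, v2}, {u3, v3}, {u1, u2}, {u2, u3}, {u1, u3}}"
    and fA: "finite A"
  shows "edges_in E A \<le> card (A - B) + 3"
proof -
  let ?U = "{u1,u2,u3}" and ?X = "A \<inter> B"
  let ?T = "{{u1,u2},{u2,u3},{u1,u3}}"
  define h where "h x = (if x = v1 then {u1,v1} else if x = v2 then {u2,v2} else {u3,v3})" for x
  have sub: "{e\<in>E. e \<subseteq> A} \<subseteq> ?T \<union> h ` (?X - ?U)"
  proof
    fix e assume e: "e \<in> {e\<in>E. e \<subseteq> A}"
    then have eE: "e \<in> E" and c2: "card e = 2" using g unfolding graph_def by auto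
    have cs: "e \<in> {{u1, v1}, {u2, v2}, {u3, v3}} \<or> e \<in> ?T" using ed e by auto
    show "e \<in> ?T \<union> h ` (?X - ?U)"
    proof (cases "e \<in> ?T")
      case True then show ?thesis by (rule UnI1)
    next
      case False
      then have cs: "e = {u1,v1} \<or> e = {u2,v2} \<or> e = {u3,v3}" using cs by auto
      have c12: "{u2,u1} = {u1,u2}" "{u3,u1} = {u1,u3}" "{u3,u2} = {u2,u3}" by (rule insert_commute)+
      have n1: "e \<noteq> {u1,u2}" "e \<noteq> {u2,u3}" "e \<noteq> {u1,u3}" using False by auto
      have sg: "card {x,x} \<noteq> 2" for x :: 'a by simp
      show ?thesis
      proof (rule UnI2)
        from cs show "e \<in> h ` (?X - ?U)"
        proof (elim disjE)
          assume e: "e = {u1,v1}"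
          have "v1 \<noteq> u1" using c2 e sg by metis
          moreover have "v1 \<noteq> u2" "v1 \<noteq> u3" using n1 e by auto
          ultimately have "v1 \<in> ?X - ?U" using X by auto
          moreover have "h v1 = e" using e unfolding h_def by simp
          ultimately show ?thesis by (metis image_eqI)
        next
          assume e: "e = {u2,v2}"
          have "v2 \<noteq> u2" using c2 e sg by metis
          moreover have "v2 \<noteq> u1" "v2 \<noteq> u3" using n1 e c12 by auto
          ultimately have "v2 \<in> ?X - ?U" using X by auto
          moreover have "h v2 = e" using e X unfolding h_def by simp
          ultimately show ?thesis by (metis image_eqI)
        next
          assume e: "e = {u3,v3}"
          have "v3 \<noteq> u3" using c2 e sg by metis
          moreover have "v3 \<noteq> u1" "v3 \<noteq> u2" using n1 e c12 by auto
          ultimately have "v3 \<in> ?X - ?U" using X by auto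
          moreover have "h v3 = e" using e X unfolding h_def by simp
          ultimately show ?thesis by (metis image_eqI)
        qed
      qed
    qed
  qed
  have fX: "finite (?X - ?U)" using X by simp
  have "edges_in E A \<le> card (?T \<union> h ` (?X - ?U))"
    unfolding edges_in_def by (rule card_mono) (use fX in simp, rule sub)
  also have "\<dots> \<le> card ?T + card (h ` (?X - ?U))" by (rule card_Un_le)
  also have "\<dots> \<le> 3 + card (?X - ?U)" using card_le_3[of "{u1,u2}" "{u2,u3}" "{u1,u3}"] card_image_le[OF fX, of h] by linarith
  also have "card (?X - ?U) \<le> card (A - B)"
  proof -
    have "u1 \<noteq> u2" "u2 \<noteq> u3" "u1 \<noteq> u3" using u(4-6) adj_ne[OF g] by blast+
    then have cU: "card ?U = 3" by simp
    have cX: "card ?X = 3" using X by simp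
    have "card (?X - ?U) = card ?X - card (?X \<inter> ?U)" by (simp add: card_Diff_subset_Int)
    moreover have "card (?U - ?X) = card ?U - card (?U \<inter> ?X)" by (simp add: card_Diff_subset_Int)
    moreover have "?U - ?X \<subseteq> A - B" using u by auto
    moreover have "finite (A - B)" using fA by simp
    ultimately show ?thesis using cU cX card_mono[of "A - B" "?U - ?X"] by (simp add: Int_commute)
  qed
  finally show ?thesis by simp
qed

lemma B1_case1:
  assumes g: "graph V E" and X: "A \<inter> B = {v1,v2,v3}" and c1: "card (A - B) = 1"
    and ind: "\<forall>x\<in>A \<inter> B. \<forall>y\<in>A \<inter> B. \<not> adj E x y"
  shows "edges_in E A \<le> card (A - B) + 3"
proof -
  obtain a where a: "A - B = {a}" using c1 card_1_singletonE by blast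
  have sub: "{e\<in>E. e \<subseteq> A} \<subseteq> (\<lambda>x. {a,x}) ` (A \<inter> B)"
  proof
    fix e assume e: "e \<in> {e\<in>E. e \<subseteq> A}"
    then obtain x y where xy: "x \<noteq> y" "e = {x,y}" "e \<in> E" "e \<subseteq> A" using edge_2[OF g] by blast
    have "adj E x y" using xy unfolding adj_def by simp
    then have "x = a \<or> y = a" using ind xy a by blast
    then show "e \<in> (\<lambda>x. {a,x}) ` (A \<inter> B)"
    proof
      assume "x = a" then have "y \<in> A \<inter> B" using xy a by auto
      then show ?thesis using xy \<open>x = a\<close> by blast
    next
      assume "y = a" then have "x \<in> A \<inter> B" using xy a by auto
      then show ?thesis using xy \<open>y = a\<close> by (auto simp: insert_commute)
    qed
  qed
  have "edges_in E A \<le> card ((\<lambda>x. {a,x}) ` (A \<inter> B))"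
    unfolding edges_in_def by (rule card_mono) (use X in simp, rule sub)
  also have "\<dots> \<le> card (A \<inter> B)" by (rule card_image_le) (use X in simp)
  also have "\<dots> \<le> 3" using X card_le_3 by simp
  finally show ?thesis by simp
qed

lemma B1:
  assumes g: "graph V E" and fV: "finite V" and d: "degenerate V E A B"
  shows "edges_in E A \<le> card (A - B) + 3"
proof -
  have sep: "separation V E A B" using d unfolding degenerate_def by simp
  have fA: "finite A" using sep_sub[OF sep] fV finite_subset by blast
  have ex: "\<exists>v1 v2 v3. A \<inter> B = {v1, v2, v3} \<and> v1 \<noteq> v2 \<and> v1 \<noteq> v3 \<and> v2 \<noteq> v3 \<and>
      ((card (A - B) = 1 \<and> (\<forall>x\<in>A \<inter> B. \<forall>y\<in>A \<inter> B. \<not> adj E x y)) \<or>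
       (\<exists>u1 u2 u3. u1 \<in> A \<and> u2 \<in> A \<and> u3 \<in> A \<and>
          adj E u1 u2 \<and> adj E u2 u3 \<and> adj E u1 u3 \<and>
          (u1 = v1 \<or> adj E u1 v1) \<and> (u2 = v2 \<or> adj E u2 v2) \<and> (u3 = v3 \<or> adj E u3 v3) \<and>
          A \<subseteq> {u1, u2, u3, v1, v2, v3} \<and>
          (\<forall>e\<in>E. e \<subseteq> A \<longrightarrow>
             e \<in> {{u1, v1}, {u2, v2}, {u3, v3}, {u1, u2}, {u2, u3}, {u1, u3}})))"
    using d unfolding degenerate_def by (elim conjE)
  from ex obtain v1 v2 v3 where X: "A \<inter> B = {v1,v2,v3}" "v1 \<noteq> v2" "v1 \<noteq> v3" "v2 \<noteq> v3"
    and cs: "(card (A - B) = 1 \<and> (\<forall>x\<in>A \<inter> B. \<forall>y\<in>A \<inter> B. \<not> adj E x y)) \<or>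
       (\<exists>u1 u2 u3. u1 \<in> A \<and> u2 \<in> A \<and> u3 \<in> A \<and>
          adj E u1 u2 \<and> adj E u2 u3 \<and> adj E u1 u3 \<and>
          (u1 = v1 \<or> adj E u1 v1) \<and> (u2 = v2 \<or> adj E u2 v2) \<and> (u3 = v3 \<or> adj E u3 v3) \<and>
          A \<subseteq> {u1, u2, u3, v1, v2, v3} \<and>
          (\<forall>e\<in>E. e \<subseteq> A \<longrightarrow>
             e \<in> {{u1, v1}, {u2, v2}, {u3, v3}, {u1, u2}, {u2, u3}, {u1, u3}}))"
    by (elim exE conjE) (rule that)
  from cs show ?thesis
  proof
    assume "card (A - B) = 1 \<and> (\<forall>x\<in>A \<inter> B. \<forall>y\<in>A \<inter> B. \<not> adj E x y)"
    then show ?thesis using B1_case1[OF g X(1)] by (metis (no_types))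
  next
    assume "\<exists>u1 u2 u3. u1 \<in> A \<and> u2 \<in> A \<and> u3 \<in> A \<and>
          adj E u1 u2 \<and> adj E u2 u3 \<and> adj E u1 u3 \<and>
          (u1 = v1 \<or> adj E u1 v1) \<and> (u2 = v2 \<or> adj E u2 v2) \<and> (u3 = v3 \<or> adj E u3 v3) \<and>
          A \<subseteq> {u1, u2, u3, v1, v2, v3} \<and>
          (\<forall>e\<in>E. e \<subseteq> A \<longrightarrow>
             e \<in> {{u1, v1}, {u2, v2}, {u3, v3}, {u1, u2}, {u2, u3}, {u1, u3}})"
    then obtain u1 u2 u3 where H: "u1 \<in> A" "u2 \<in> A" "u3 \<in> A" "adj E u1 u2" "adj E u2 u3" "adj E u1 u3"
      "A \<subseteq> {u1, u2, u3, v1, v2, v3}"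
      "\<forall>e\<in>E. e \<subseteq> A \<longrightarrow> e \<in> {{u1, v1}, {u2, v2}, {u3, v3}, {u1, u2}, {u2, u3}, {u1, u3}}"
      by (elim exE conjE) (rule that)
    then show ?thesis using B1_case2[OF g X H fA] by simp
  qed
qed

lemma sep_sym: "separation V E A B \<Longrightarrow> separation V E B A"
  unfolding separation_def by (metis Un_commute adj_sym)

lemma nt_sym: "nontrivial_sep V A B \<Longrightarrow> nontrivial_sep V B A"
  unfolding nontrivial_sep_def by simp

lemma edge_side:
  assumes g: "graph V E" and sep: "separation V E A B" and e: "e \<in> E"
  shows "e \<subseteq> A \<or> e \<subseteq> B"
proof -
  obtain p q where pq: "p \<noteq> q" "e = {p,q}" using edge_2[OF g e] by blast
  have a: "adj E p q" "adj E q p" using pq e unfolding adj_def by (auto simp: insert_commute)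
  have V: "p \<in> V" "q \<in> V" using adj_V[OF g a(1)] by auto
  show ?thesis
  proof (cases "p \<in> A - B")
    case True
    then have "q \<in> A" using sep_nb[OF sep g True a(1)] by simp
    then show ?thesis using True pq by simp
  next
    case False
    then have pB: "p \<in> B" using V sep_U[OF sep] by auto
    show ?thesis
    proof (cases "q \<in> A - B")
      case True
      then have "p \<in> A" using sep_nb[OF sep g True a(2)] by simp
      then show ?thesis using True pq by simp
    next
      case False
      then have "q \<in> B" using V sep_U[OF sep] by auto
      then show ?thesis using pB pq by simp
    qed
  qed
qed

lemma dA_bound:
  assumes g: "graph V E" and fA: "finite A" and x: "x \<in> A \<inter> B"
  shows "card {e\<in>{e\<in>E. e \<subseteq> A}. x\<in>e} \<le> card {e\<in>{e\<in>E. e \<subseteq> A \<inter> B}. x\<in>e} + card (A - B)"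
proof -
  have sub: "{e\<in>{e\<in>E. e \<subseteq> A}. x\<in>e} \<subseteq> {e\<in>{e\<in>E. e \<subseteq> A \<inter> B}. x\<in>e} \<union> (\<lambda>s. {x,s}) ` (A - B)"
  proof
    fix e assume e: "e \<in> {e\<in>{e\<in>E. e \<subseteq> A}. x\<in>e}"
    then obtain y where y: "e = {x,y}" using edge_other[OF g] by blast
    have yA: "y \<in> A" using e y by auto
    show "e \<in> {e\<in>{e\<in>E. e \<subseteq> A \<inter> B}. x\<in>e} \<union> (\<lambda>s. {x,s}) ` (A - B)"
    proof (cases "e \<subseteq> B")
      case True then show ?thesis using e by auto
    next
      case False
      then have "y \<in> A - B" using y yA x by auto
      then show ?thesis using y by blast
    qed
  qed
  have "card {e\<in>{e\<in>E. e \<subseteq> A}. x\<in>e} \<le> card ({e\<in>{e\<in>E. e \<subseteq> A \<inter> B}. x\<in>e} \<union> (\<lambda>s. {x,s}) ` (A - B))"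
    by (rule card_mono) (use finE[OF g] fA in simp, rule sub)
  also have "\<dots> \<le> card {e\<in>{e\<in>E. e \<subseteq> A \<inter> B}. x\<in>e} + card ((\<lambda>s. {x,s}) ` (A - B))" by (rule card_Un_le)
  also have "\<dots> \<le> card {e\<in>{e\<in>E. e \<subseteq> A \<inter> B}. x\<in>e} + card (A - B)"
    using card_image_le[of "A - B" "\<lambda>s. {x,s}"] fA by simp
  finally show ?thesis .
qed

lemma deg_decomp:
  assumes g: "graph V E" and sep: "separation V E A B"
  shows "card {e\<in>E. x\<in>e} + card {e\<in>{e\<in>E. e \<subseteq> A \<inter> B}. x\<in>e}
       = card {e\<in>{e\<in>E. e \<subseteq> A}. x\<in>e} + card {e\<in>{e\<in>E. e \<subseteq> B}. x\<in>e}"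
proof -
  let ?PA = "{e\<in>{e\<in>E. e \<subseteq> A}. x\<in>e}" and ?PB = "{e\<in>{e\<in>E. e \<subseteq> B}. x\<in>e}"
  have fE: "finite E" using finE[OF g] .
  have u: "{e\<in>E. x\<in>e} = ?PA \<union> ?PB" using edge_side[OF g sep] by auto
  have i: "{e\<in>{e\<in>E. e \<subseteq> A \<inter> B}. x\<in>e} = ?PA \<inter> ?PB" by auto
  have "card ?PA + card ?PB = card (?PA \<union> ?PB) + card (?PA \<inter> ?PB)"
    by (rule card_Un_Int) (use fE in simp)+
  then show ?thesis using u i by simp
qed

lemma B3:
  assumes tc: "three_connected V E" and sep: "separation V E A B" and nt: "nontrivial_sep V A B"
    and o3: "card (A \<inter> B) = 3"
    and hA: "edges_in E A \<le> card (A - B) + 3" and hB: "edges_in E B \<le> card (B - A) + 3"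
  shows False
proof -
  have g: "graph V E" using tc tc_graph by blast
  have fV: "finite V" using graph_fin[OF g] .
  have fA: "finite A" and fB: "finite B" using sep_sub[OF sep] fV finite_subset by blast+
  let ?X = "A \<inter> B"
  define dA where "dA x = card {e\<in>{e\<in>E. e \<subseteq> A}. x\<in>e}" for x
  define dB where "dB x = card {e\<in>{e\<in>E. e \<subseteq> B}. x\<in>e}" for x
  define dX where "dX x = card {e\<in>{e\<in>E. e \<subseteq> A \<inter> B}. x\<in>e}" for x
  define k where "k = card (A - B)"
  define k' where "k' = card (B - A)"
  have k1: "k \<ge> 1" "k' \<ge> 1" using nontriv_ne[OF sep nt] fA fB unfolding k_def k'_def
    by (simp_all add: Suc_le_eq card_gt_0_iff)
  have sA: "3 * k + (\<Sum>x\<in>?X. dA x) \<le> 2 * edges_in E A"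
    using side_ineq[OF tc sep] unfolding k_def dA_def .
  have sB0: "3 * k' + (\<Sum>x\<in>B \<inter> A. dB x) \<le> 2 * edges_in E B"
    using side_ineq[OF tc sep_sym[OF sep]] unfolding k'_def dB_def .
  have sB: "3 * k' + (\<Sum>x\<in>?X. dB x) \<le> 2 * edges_in E B" using sB0 by (simp add: Int_commute)
  have bA: "dA x \<le> dX x + k" if "x \<in> ?X" for x
    using dA_bound[OF g fA that] unfolding dA_def dX_def k_def .
  have bB: "dB x \<le> dX x + k'" if "x \<in> ?X" for x
    using dA_bound[OF g fB, of x A] that unfolding dB_def dX_def k'_def by (simp add: Int_commute)
  have dec: "card {e\<in>E. x\<in>e} + dX x = dA x + dB x" for x
    using deg_decomp[OF g sep] unfolding dA_def dB_def dX_def by simp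
  have deg3: "3 \<le> card {e\<in>E. x\<in>e}" if "x \<in> ?X" for x
    using tc_deg[OF tc] deg_card[OF g] that sep_sub[OF sep] by auto
  have s1: "(\<Sum>x\<in>?X. 3 + dX x) \<le> (\<Sum>x\<in>?X. dA x + dB x)"
  proof (rule sum_mono)
    fix x assume "x \<in> ?X" then show "3 + dX x \<le> dA x + dB x" using dec[of x] deg3[of x] by linarith
  qed
  have s2: "(\<Sum>x\<in>?X. dA x) \<le> (\<Sum>x\<in>?X. dX x + k)" by (rule sum_mono) (rule bA)
  have s3: "(\<Sum>x\<in>?X. dB x) \<le> (\<Sum>x\<in>?X. dX x + k')" by (rule sum_mono) (rule bB)
  define TA where "TA = (\<Sum>x\<in>?X. dA x)"
  define TB where "TB = (\<Sum>x\<in>?X. dB x)"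
  define DX where "DX = (\<Sum>x\<in>?X. dX x)"
  have e1: "9 + DX \<le> TA + TB" using s1 o3 unfolding TA_def TB_def DX_def by (simp add: sum.distrib)
  have e2: "TA \<le> DX + 3 * k" using s2 o3 unfolding TA_def DX_def by (simp add: sum.distrib)
  have e3: "TB \<le> DX + 3 * k'" using s3 o3 unfolding TB_def DX_def by (simp add: sum.distrib)
  have e4: "3 * k + TA \<le> 2 * k + 6" using sA hA unfolding TA_def k_def by linarith
  have e5: "3 * k' + TB \<le> 2 * k' + 6" using sB hB unfolding TB_def k'_def by linarith
  have d1: "DX \<le> 1" using e1 e4 e5 k1 by linarith
  have t1: "TA \<le> 4"
  proof (cases "k = 1")
    case True then show ?thesis using e2 d1 by linarith
  next
    case False then show ?thesis using e4 k1 by linarith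
  qed
  have t2: "TB \<le> 4"
  proof (cases "k' = 1")
    case True then show ?thesis using e3 d1 by linarith
  next
    case False then show ?thesis using e5 k1 by linarith
  qed
  show False using e1 t1 t2 by linarith
qed

lemma degI1:
  assumes "separation V E A B" "nontrivial_sep V A B" "A \<inter> B = {v1,v2,v3}" "v1 \<noteq> v2" "v1 \<noteq> v3" "v2 \<noteq> v3"
    "card (A - B) = 1" "\<forall>x\<in>A \<inter> B. \<forall>y\<in>A \<inter> B. \<not> adj E x y"
  shows "degenerate V E A B"
proof -
  have "sep_order A B = 3" unfolding sep_order_def using assms(3-6) by simp
  then show ?thesis unfolding degenerate_def
    apply (intro conjI assms(1,2))
     apply assumption
    apply (rule exI[of _ v1], rule exI[of _ v2], rule exI[of _ v3])
    apply (intro conjI assms(3-6))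
    apply (rule disjI1)
    apply (intro conjI assms(7,8))
    done
qed

lemma degI2:
  assumes "separation V E A B" "nontrivial_sep V A B" "A \<inter> B = {v1,v2,v3}" "v1 \<noteq> v2" "v1 \<noteq> v3" "v2 \<noteq> v3"
    "u1 \<in> A" "u2 \<in> A" "u3 \<in> A" "adj E u1 u2" "adj E u2 u3" "adj E u1 u3"
    "u1 = v1 \<or> adj E u1 v1" "u2 = v2 \<or> adj E u2 v2" "u3 = v3 \<or> adj E u3 v3"
    "A \<subseteq> {u1, u2, u3, v1, v2, v3}"
    "\<forall>e\<in>E. e \<subseteq> A \<longrightarrow> e \<in> {{u1, v1}, {u2, v2}, {u3, v3}, {u1, u2}, {u2, u3}, {u1, u3}}"
  shows "degenerate V E A B"
proof -
  have "sep_order A B = 3" unfolding sep_order_def using assms(3-6) by simp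
  then show ?thesis unfolding degenerate_def
    apply (intro conjI assms(1,2))
     apply assumption
    apply (rule exI[of _ v1], rule exI[of _ v2], rule exI[of _ v3])
    apply (intro conjI assms(3-6))
    apply (rule disjI2)
    apply (rule exI[of _ u1], rule exI[of _ u2], rule exI[of _ u3])
    apply (intro conjI assms(7-17))
    done
qed

lemma nb_A: "graph V E \<Longrightarrow> separation V E A B \<Longrightarrow> s \<in> A - B \<Longrightarrow> nbrs E s \<subseteq> A - {s}"
  unfolding nbrs_def using sep_nb adj_ne by fastforce

lemma card_img2: "card ((\<lambda>x. {a,x}) ` M) = card M"
proof (rule card_image)
  show "inj_on (\<lambda>x. {a,x}) M" unfolding inj_on_def by (metis doubleton_eq_iff)
qed

lemma card3E:
  assumes "card X = 3"
  obtains x y z where "X = {x,y,z}" "x \<noteq> y" "x \<noteq> z" "y \<noteq> z"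
  using assms by (metis card_3_iff)

lemma B2_k1:
  assumes tc: "three_connected V E" and sep: "separation V E A B" and nt: "nontrivial_sep V A B"
    and o3: "card (A \<inter> B) = 3" and h: "edges_in E A \<le> card (A - B) + 3" and k: "card (A - B) = 1"
  shows "degenerate V E A B"
proof -
  have g: "graph V E" using tc tc_graph by blast
  have fV: "finite V" using graph_fin[OF g] .
  have fA: "finite A" using sep_sub[OF sep] fV finite_subset by blast
  have fE: "finite E" using finE[OF g] .
  let ?X = "A \<inter> B"
  have fX: "finite ?X" using fA by simp
  obtain a where a: "A - B = {a}" using k card_1_singletonE by blast
  have Aeq: "A = insert a ?X" using a by auto
  have aV: "a \<in> V" using a sep_sub[OF sep] by auto
  have NX: "nbrs E a \<subseteq> ?X" using nb_A[OF g sep, of a] a Aeq by auto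
  have "3 \<le> card (nbrs E a)" using tc_deg[OF tc aV] .
  then have N: "nbrs E a = ?X" using card_seteq[OF fX NX] o3 by simp
  have adjx: "adj E a x" if "x \<in> ?X" for x using N that unfolding nbrs_def by auto
  let ?Ea = "(\<lambda>x. {a,x}) ` ?X" and ?EX = "{e\<in>E. e \<subseteq> ?X}"
  have sub: "?Ea \<union> ?EX \<subseteq> {e\<in>E. e \<subseteq> A}" using adjx Aeq unfolding adj_def by auto
  have dis: "?Ea \<inter> ?EX = {}" using a by auto
  have "card (?Ea \<union> ?EX) = card ?Ea + card ?EX"
    by (rule card_Un_disjoint) (use fX fE dis in simp_all)
  moreover have "card (?Ea \<union> ?EX) \<le> edges_in E A" unfolding edges_in_def
    by (rule card_mono) (use fE sub in simp_all)
  ultimately have cEX: "card ?EX \<le> 1" using h k card_img2[of a ?X] o3 by simp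
  obtain v1 v2 v3 where X: "?X = {v1,v2,v3}" "v1 \<noteq> v2" "v1 \<noteq> v3" "v2 \<noteq> v3" using card3E[OF o3] by blast
  have fEX: "finite ?EX" using fE by simp
  show ?thesis
  proof (cases "card ?EX = 0")
    case True
    then have "?EX = {}" using fEX by simp
    then have "\<forall>x\<in>?X. \<forall>y\<in>?X. \<not> adj E x y" unfolding adj_def by blast
    then show ?thesis using degI1[OF sep nt X k] by simp
  next
    case False
    then have "card ?EX = 1" using cEX by simp
    then obtain f where f: "?EX = {f}" using card_1_singletonE by blast
    then have fE': "f \<in> E" "f \<subseteq> ?X" by auto
    obtain p q where pq: "p \<noteq> q" "f = {p,q}" using edge_2[OF g fE'(1)] by blast
    have pqX: "p \<in> ?X" "q \<in> ?X" using pq fE' by auto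
    have "card (?X - {p,q}) = 1" using o3 pq pqX by (simp add: card_Diff_subset)
    then obtain r where r: "?X - {p,q} = {r}" using card_1_singletonE by blast
    have rX: "r \<in> ?X" "r \<noteq> p" "r \<noteq> q" using r by auto
    have Xpqr: "?X = {p,q,r}" using r pqX by auto
    have apq: "adj E p q" using pq fE' unfolding adj_def by simp
    have ed: "\<forall>e\<in>E. e \<subseteq> A \<longrightarrow> e \<in> {{p, p}, {q, q}, {a, r}, {p, q}, {q, a}, {p, a}}"
    proof (intro ballI impI)
      fix e assume eE: "e \<in> E" and eA: "e \<subseteq> A"
      show "e \<in> {{p, p}, {q, q}, {a, r}, {p, q}, {q, a}, {p, a}}"
      proof (cases "a \<in> e")
        case True
        then obtain w where w: "w \<noteq> a" "e = {a,w}" using edge_other[OF g eE] by blast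
        then have "w \<in> {p,q,r}" using eA Aeq Xpqr by auto
        then show ?thesis using w by (auto simp: insert_commute)
      next
        case False
        then have "e \<in> ?EX" using eE eA Aeq by auto
        then have "e = {p,q}" using f pq by blast
        then show ?thesis by simp
      qed
    qed
    show ?thesis
    proof (rule degI2[OF sep nt Xpqr pq(1) rX(2)[symmetric] rX(3)[symmetric], of p q a])
      show "p \<in> A" "q \<in> A" "a \<in> A" using pqX Aeq by auto
      show "adj E p q" by (rule apq)
      show "adj E q a" using adjx[of q] pqX(2) adj_sym by metis
      show "adj E p a" using adjx[of p] pqX(1) adj_sym by metis
      show "p = p \<or> adj E p p" "q = q \<or> adj E q q" by simp_all
      show "a = r \<or> adj E a r" using adjx rX by simp
      show "A \<subseteq> {p, q, a, p, q, r}" using Aeq Xpqr by auto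
      show "\<forall>e\<in>E. e \<subseteq> A \<longrightarrow> e \<in> {{p, p}, {q, q}, {a, r}, {p, q}, {q, a}, {p, a}}" by (rule ed)
    qed
  qed
qed

lemma B2_k2:
  assumes tc: "three_connected V E" and sep: "separation V E A B" and nt: "nontrivial_sep V A B"
    and o3: "card (A \<inter> B) = 3" and h: "edges_in E A \<le> card (A - B) + 3" and k: "card (A - B) = 2"
  shows "degenerate V E A B"
proof -
  have g: "graph V E" using tc tc_graph by blast
  have fV: "finite V" using graph_fin[OF g] .
  have fA: "finite A" using sep_sub[OF sep] fV finite_subset by blast
  have fE: "finite E" using finE[OF g] .
  let ?X = "A \<inter> B"
  have fX: "finite ?X" using fA by simp
  obtain a b where ab: "A - B = {a,b}" "a \<noteq> b" using k card_2_iff by metis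
  have Aeq: "A = insert a (insert b ?X)" using ab by auto
  have aX: "a \<notin> ?X" "b \<notin> ?X" using ab by auto
  have aV: "a \<in> V" "b \<in> V" using ab sep_sub[OF sep] by auto
  define Na where "Na = nbrs E a \<inter> ?X"
  define Nb where "Nb = nbrs E b \<inter> ?X"
  define ia where "ia = (if adj E a b then 1 else 0::nat)"
  have NaX: "Na \<subseteq> ?X" "Nb \<subseteq> ?X" unfolding Na_def Nb_def by auto
  have fN: "finite Na" "finite Nb" using NaX fX finite_subset by blast+
  have nA: "nbrs E a \<subseteq> insert b ?X" using nb_A[OF g sep, of a] ab Aeq by auto
  have nB: "nbrs E b \<subseteq> insert a ?X" using nb_A[OF g sep, of b] ab Aeq by auto
  have da: "card (nbrs E a) \<le> card Na + ia"
  proof -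
    have "nbrs E a \<subseteq> Na \<union> {y. y = b \<and> adj E a b}" using nA unfolding Na_def nbrs_def by auto
    then have "card (nbrs E a) \<le> card (Na \<union> {y. y = b \<and> adj E a b})"
      by (rule card_mono[rotated]) (use fN in simp)
    also have "\<dots> \<le> card Na + card {y. y = b \<and> adj E a b}" by (rule card_Un_le)
    also have "card {y. y = b \<and> adj E a b} = ia" unfolding ia_def by auto
    finally show ?thesis .
  qed
  have db: "card (nbrs E b) \<le> card Nb + ia"
  proof -
    have "nbrs E b \<subseteq> Nb \<union> {y. y = a \<and> adj E a b}" using nB unfolding Nb_def nbrs_def by (auto simp: adj_sym)
    then have "card (nbrs E b) \<le> card (Nb \<union> {y. y = a \<and> adj E a b})"
      by (rule card_mono[rotated]) (use fN in simp)
    also have "\<dots> \<le> card Nb + card {y. y = a \<and> adj E a b}" by (rule card_Un_le)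
    also have "card {y. y = a \<and> adj E a b} = ia" unfolding ia_def by auto
    finally show ?thesis .
  qed
  have d3: "3 \<le> card (nbrs E a)" "3 \<le> card (nbrs E b)" using tc_deg[OF tc] aV by auto
  let ?Ea = "(\<lambda>x. {a,x}) ` Na" and ?Eb = "(\<lambda>x. {b,x}) ` Nb" and ?EX = "{e\<in>E. e \<subseteq> ?X}"
  let ?Eab = "{e. e = {a,b} \<and> adj E a b}"
  have cEab: "card ?Eab = ia" unfolding ia_def by auto
  have sub: "((?Ea \<union> ?Eb) \<union> ?EX) \<union> ?Eab \<subseteq> {e\<in>E. e \<subseteq> A}"
    using Aeq unfolding Na_def Nb_def nbrs_def adj_def by auto
  have fEX: "finite ?EX" using fE by simp
  have dis1: "?Ea \<inter> ?Eb = {}"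
  proof (rule ccontr)
    assume "?Ea \<inter> ?Eb \<noteq> {}"
    then obtain x y where xy: "x \<in> Na" "y \<in> Nb" "{a,x} = {b,y}" by blast
    then have "a = y" using ab(2) by (auto simp: doubleton_eq_iff)
    then show False using xy NaX aX by auto
  qed
  have c1: "card (?Ea \<union> ?Eb) = card Na + card Nb"
    using card_Un_disjoint[of ?Ea ?Eb] fN dis1 card_img2[of a Na] card_img2[of b Nb] by simp
  have c2: "card ((?Ea \<union> ?Eb) \<union> ?EX) = card Na + card Nb + card ?EX"
    using card_Un_disjoint[of "?Ea \<union> ?Eb" ?EX] fN fEX c1 aX by auto
  have c3: "card (((?Ea \<union> ?Eb) \<union> ?EX) \<union> ?Eab) = card Na + card Nb + card ?EX + ia"
  proof -
    have "(?Ea \<union> ?Eb \<union> ?EX) \<inter> ?Eab = {}" using aX NaX ab(2) by (auto simp: doubleton_eq_iff)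
    moreover have "finite ?Eab" by simp
    ultimately show ?thesis using card_Un_disjoint[of "?Ea \<union> ?Eb \<union> ?EX" ?Eab] fN fEX c2 cEab by auto
  qed
  have "card (((?Ea \<union> ?Eb) \<union> ?EX) \<union> ?Eab) \<le> edges_in E A" unfolding edges_in_def
    by (rule card_mono) (use fE sub in simp_all)
  then have tot: "card Na + card Nb + card ?EX + ia \<le> 5" using c3 h k by simp
  have ia1: "ia = 1" using tot da db d3 unfolding ia_def by (cases "adj E a b") auto
  have cNa: "card Na = 2" "card Nb = 2" and cEX: "card ?EX = 0" using tot da db d3 ia1 by linarith+
  have EX0: "?EX = {}" using cEX fEX by simp
  have adjab: "adj E a b" proof (rule ccontr) assume "\<not> adj E a b" then have "ia = 0" unfolding ia_def by simp
      then show False using ia1 by simp qed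
  have cov: "?X \<subseteq> Na \<union> Nb"
  proof
    fix x assume x: "x \<in> ?X"
    obtain s where s: "s \<in> A - B" "adj E x s" using tc_cover[OF tc sep nt o3 x] by blast
    have "adj E s x" using s(2) adj_sym by metis
    then show "x \<in> Na \<union> Nb" using s(1) ab x unfolding Na_def Nb_def nbrs_def by auto
  qed
  have U: "Na \<union> Nb = ?X" using cov NaX by auto
  have "card Na + card Nb = card (Na \<union> Nb) + card (Na \<inter> Nb)" by (rule card_Un_Int) (use fN in simp_all)
  then have "card (Na \<inter> Nb) = 1" using cNa U o3 by simp
  then obtain c where c: "Na \<inter> Nb = {c}" using card_1_singletonE by blast
  have "card (Na - {c}) = 1" using cNa c by (simp add: card_Diff_singleton_if) (metis Int_iff insertI1)
  then obtain p where p: "Na - {c} = {p}" using card_1_singletonE by blast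
  have "card (Nb - {c}) = 1" using cNa c by (simp add: card_Diff_singleton_if) (metis Int_iff insertI1)
  then obtain q where q: "Nb - {c} = {q}" using card_1_singletonE by blast
  have Na_eq: "Na = {c,p}" using p c by auto
  have Nb_eq: "Nb = {c,q}" using q c by auto
  have pc: "p \<noteq> c" "q \<noteq> c" using p q by auto
  have pq: "p \<noteq> q"
  proof
    assume "p = q"
    then have "?X = {c,p}" using U Na_eq Nb_eq by auto
    then have "card ?X \<le> 2" by (simp add: card_insert_if)
    then show False using o3 by simp
  qed
  have Xeq: "?X = {p,q,c}" using U Na_eq Nb_eq by auto
  have adjs: "adj E a c" "adj E a p" "adj E b c" "adj E b q"
    using Na_eq Nb_eq unfolding Na_def Nb_def nbrs_def by auto
  have ed: "\<forall>e\<in>E. e \<subseteq> A \<longrightarrow> e \<in> {{a, p}, {b, q}, {c, c}, {a, b}, {b, c}, {a, c}}"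
  proof (intro ballI impI)
    fix e assume eE: "e \<in> E" and eA: "e \<subseteq> A"
    show "e \<in> {{a, p}, {b, q}, {c, c}, {a, b}, {b, c}, {a, c}}"
    proof (cases "a \<in> e")
      case True
      then obtain w where w: "w \<noteq> a" "e = {a,w}" using edge_other[OF g eE] by blast
      have "w \<in> nbrs E a" using w eE unfolding nbrs_def adj_def by simp
      then have "w = b \<or> w \<in> Na" using w eA Aeq unfolding Na_def by auto
      then show ?thesis using w Na_eq by auto
    next
      case False
      show ?thesis
      proof (cases "b \<in> e")
        case True
        then obtain w where w: "w \<noteq> b" "e = {b,w}" using edge_other[OF g eE] by blast
        have "w \<in> nbrs E b" using w eE unfolding nbrs_def adj_def by simp
        then have "w = a \<or> w \<in> Nb" using w eA Aeq unfolding Nb_def by auto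
        then show ?thesis using w Nb_eq by (auto simp: insert_commute)
      next
        case False
        then have "e \<in> ?EX" using \<open>a \<notin> e\<close> eE eA Aeq by auto
        then show ?thesis using EX0 by blast
      qed
    qed
  qed
  show ?thesis
  proof (rule degI2[OF sep nt Xeq pq pc(1) pc(2), of a b c])
    show "a \<in> A" "b \<in> A" "c \<in> A" using Aeq Xeq by auto
    show "adj E a b" "adj E b c" "adj E a c" using adjab adjs by auto
    show "a = p \<or> adj E a p" "b = q \<or> adj E b q" "c = c \<or> adj E c c" using adjs by auto
    show "A \<subseteq> {a, b, c, p, q, c}" using Aeq Xeq by auto
    show "\<forall>e\<in>E. e \<subseteq> A \<longrightarrow> e \<in> {{a, p}, {b, q}, {c, c}, {a, b}, {b, c}, {a, c}}" by (rule ed)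
  qed
qed

lemma ne_obtain: "S \<inter> T \<noteq> {} \<Longrightarrow> (\<And>e. e \<in> S \<Longrightarrow> e \<in> T \<Longrightarrow> P) \<Longrightarrow> P"
  by blast

lemma img_disj: "a \<noteq> b \<Longrightarrow> a \<notin> N \<Longrightarrow> (\<lambda>x. {a,x}) ` M \<inter> (\<lambda>x. {b,x}) ` N = {}"
  by (auto simp: doubleton_eq_iff)

lemma B2_k3:
  assumes tc: "three_connected V E" and sep: "separation V E A B" and nt: "nontrivial_sep V A B"
    and o3: "card (A \<inter> B) = 3" and h: "edges_in E A \<le> card (A - B) + 3" and k: "card (A - B) = 3"
  shows "degenerate V E A B"
proof -
  have g: "graph V E" using tc tc_graph by blast
  have fV: "finite V" using graph_fin[OF g] .
  have fA: "finite A" using sep_sub[OF sep] fV finite_subset by blast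
  have fE: "finite E" using finE[OF g] .
  let ?X = "A \<inter> B"
  have fX: "finite ?X" using fA by simp
  obtain a b c where abc: "A - B = {a,b,c}" "a \<noteq> b" "a \<noteq> c" "b \<noteq> c" using card3E[OF k] by blast
  have Aeq: "A = insert a (insert b (insert c ?X))" using abc by auto
  have aX: "a \<notin> ?X" "b \<notin> ?X" "c \<notin> ?X" using abc by auto
  have aV: "a \<in> V" "b \<in> V" "c \<in> V" using abc sep_sub[OF sep] by auto
  define Ma where "Ma = nbrs E a \<inter> ?X"
  define Mb where "Mb = nbrs E b \<inter> ?X"
  define Mc where "Mc = nbrs E c \<inter> ?X"
  define iab where "iab = (if adj E a b then 1 else 0::nat)"
  define iac where "iac = (if adj E a c then 1 else 0::nat)"
  define ibc where "ibc = (if adj E b c then 1 else 0::nat)"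
  have MX: "Ma \<subseteq> ?X" "Mb \<subseteq> ?X" "Mc \<subseteq> ?X" unfolding Ma_def Mb_def Mc_def by auto
  have fM: "finite Ma" "finite Mb" "finite Mc" using MX fX finite_subset by blast+
  have nA: "nbrs E a \<subseteq> insert b (insert c ?X)" using nb_A[OF g sep, of a] abc Aeq by auto
  have nB: "nbrs E b \<subseteq> insert a (insert c ?X)" using nb_A[OF g sep, of b] abc Aeq by auto
  have nC: "nbrs E c \<subseteq> insert a (insert b ?X)" using nb_A[OF g sep, of c] abc Aeq by auto
  have cnt: "card (M \<union> {y. y = p \<and> P} \<union> {y. y = q \<and> Q}) \<le> card M + (if P then 1 else 0) + (if Q then 1 else 0)"
    if "finite M" for M p q P Q
  proof -
    have "card (M \<union> {y. y = p \<and> P} \<union> {y. y = q \<and> Q}) \<le> card (M \<union> {y. y = p \<and> P}) + card {y. y = q \<and> Q}"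
      by (rule card_Un_le)
    also have "\<dots> \<le> card M + card {y. y = p \<and> P} + card {y. y = q \<and> Q}" using card_Un_le by simp
    also have "card {y. y = p \<and> P} = (if P then 1 else 0)" by auto
    also have "card {y. y = q \<and> Q} = (if Q then 1 else 0)" by auto
    finally show ?thesis .
  qed
  have da: "card (nbrs E a) \<le> card Ma + iab + iac"
  proof -
    have "nbrs E a \<subseteq> Ma \<union> {y. y = b \<and> adj E a b} \<union> {y. y = c \<and> adj E a c}" using nA unfolding Ma_def nbrs_def by auto
    then have "card (nbrs E a) \<le> card (Ma \<union> {y. y = b \<and> adj E a b} \<union> {y. y = c \<and> adj E a c})"
      by (rule card_mono[rotated]) (use fM in simp)
    then show ?thesis using cnt[OF fM(1)] unfolding iab_def iac_def by (meson le_trans)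
  qed
  have db: "card (nbrs E b) \<le> card Mb + iab + ibc"
  proof -
    have "nbrs E b \<subseteq> Mb \<union> {y. y = a \<and> adj E a b} \<union> {y. y = c \<and> adj E b c}" using nB unfolding Mb_def nbrs_def by (auto simp: adj_sym)
    then have "card (nbrs E b) \<le> card (Mb \<union> {y. y = a \<and> adj E a b} \<union> {y. y = c \<and> adj E b c})"
      by (rule card_mono[rotated]) (use fM in simp)
    then show ?thesis using cnt[OF fM(2)] unfolding iab_def ibc_def by (meson le_trans)
  qed
  have dc: "card (nbrs E c) \<le> card Mc + iac + ibc"
  proof -
    have "nbrs E c \<subseteq> Mc \<union> {y. y = a \<and> adj E a c} \<union> {y. y = b \<and> adj E b c}" using nC unfolding Mc_def nbrs_def by (auto simp: adj_sym)
    then have "card (nbrs E c) \<le> card (Mc \<union> {y. y = a \<and> adj E a c} \<union> {y. y = b \<and> adj E b c})"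
      by (rule card_mono[rotated]) (use fM in simp)
    then show ?thesis using cnt[OF fM(3)] unfolding iac_def ibc_def by (meson le_trans)
  qed
  have d3: "3 \<le> card (nbrs E a)" "3 \<le> card (nbrs E b)" "3 \<le> card (nbrs E c)" using tc_deg[OF tc] aV by auto
  let ?Ea = "(\<lambda>x. {a,x}) ` Ma" and ?Eb = "(\<lambda>x. {b,x}) ` Mb" and ?Ec = "(\<lambda>x. {c,x}) ` Mc"
  let ?EX = "{e\<in>E. e \<subseteq> ?X}"
  let ?Eab = "{e. e = {a,b} \<and> adj E a b}" and ?Eac = "{e. e = {a,c} \<and> adj E a c}" and ?Ebc = "{e. e = {b,c} \<and> adj E b c}"
  have fEX: "finite ?EX" using fE by simp
  have fin: "finite ?Ea" "finite ?Eb" "finite ?Ec" "finite ?Eab" "finite ?Eac" "finite ?Ebc" using fM by simp_all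
  have cE: "card ?Eab = iab" "card ?Eac = iac" "card ?Ebc = ibc" unfolding iab_def iac_def ibc_def by auto
  have nM: "a \<notin> Mb" "a \<notin> Mc" "b \<notin> Mc" using MX aX by auto
  have c1: "card (?Ea \<union> ?Eb) = card Ma + card Mb"
    using card_Un_disjoint[of ?Ea ?Eb] fin img_disj[OF abc(2) nM(1), of Ma] card_img2[of a Ma] card_img2[of b Mb] by simp
  have c2: "card (?Ea \<union> ?Eb \<union> ?Ec) = card Ma + card Mb + card Mc"
  proof -
    have "(?Ea \<union> ?Eb) \<inter> ?Ec = {}" using img_disj[OF abc(3) nM(2), of Ma] img_disj[OF abc(4) nM(3), of Mb] by auto
    then show ?thesis using card_Un_disjoint[of "?Ea \<union> ?Eb" ?Ec] fin c1 card_img2[of c Mc] by simp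
  qed
  have c3: "card (?Ea \<union> ?Eb \<union> ?Ec \<union> ?EX) = card Ma + card Mb + card Mc + card ?EX"
  proof -
    have "(?Ea \<union> ?Eb \<union> ?Ec) \<inter> ?EX = {}" using aX by auto
    then show ?thesis using card_Un_disjoint[of "?Ea \<union> ?Eb \<union> ?Ec" ?EX] fin fEX c2 by simp
  qed
  have inX: "e \<inter> ?X \<noteq> {}" if "e \<in> ?Ea \<union> ?Eb \<union> ?Ec \<union> ?EX" for e
  proof -
    have "e \<in> ?Ea \<or> e \<in> ?Eb \<or> e \<in> ?Ec \<or> e \<in> ?EX" using that by blast
    then show ?thesis
    proof (elim disjE)
      assume "e \<in> ?EX" then obtain y z where "y \<noteq> z" "e = {y,z}" "e \<subseteq> ?X" using edge_2[OF g] by blast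
      then show ?thesis by auto
    qed (use MX in auto)
  qed
  have c4: "card (?Ea \<union> ?Eb \<union> ?Ec \<union> ?EX \<union> ?Eab) = card Ma + card Mb + card Mc + card ?EX + iab"
  proof -
    have "(?Ea \<union> ?Eb \<union> ?Ec \<union> ?EX) \<inter> ?Eab = {}"
    proof (rule ccontr)
      assume "(?Ea \<union> ?Eb \<union> ?Ec \<union> ?EX) \<inter> ?Eab \<noteq> {}"
      then obtain e where e1: "e \<in> ?Ea \<union> ?Eb \<union> ?Ec \<union> ?EX" and e2: "e \<in> ?Eab" by (rule ne_obtain)
      have e: "e \<in> ?Ea \<union> ?Eb \<union> ?Ec \<union> ?EX" "e = {a,b}" using e1 e2 by simp_all
      show False using inX[OF e(1)] e(2) aX by auto
    qed
    then show ?thesis using card_Un_disjoint[of "?Ea \<union> ?Eb \<union> ?Ec \<union> ?EX" ?Eab] fin fEX c3 cE by simp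
  qed
  have c5: "card (?Ea \<union> ?Eb \<union> ?Ec \<union> ?EX \<union> ?Eab \<union> ?Eac) = card Ma + card Mb + card Mc + card ?EX + iab + iac"
  proof -
    have "(?Ea \<union> ?Eb \<union> ?Ec \<union> ?EX \<union> ?Eab) \<inter> ?Eac = {}"
    proof (rule ccontr)
      assume "(?Ea \<union> ?Eb \<union> ?Ec \<union> ?EX \<union> ?Eab) \<inter> ?Eac \<noteq> {}"
      then obtain e where e1: "e \<in> ?Ea \<union> ?Eb \<union> ?Ec \<union> ?EX \<union> ?Eab" and e2: "e \<in> ?Eac" by (rule ne_obtain)
      have ee: "e = {a,c}" using e2 by simp
      from e1 show False
      proof (rule UnE)
        assume hh: "e \<in> ?Ea \<union> ?Eb \<union> ?Ec \<union> ?EX" show False using inX[OF hh] ee aX by auto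
      next
        assume "e \<in> ?Eab" then have "e = {a,b}" by simp
        then show False using ee abc by (simp add: doubleton_eq_iff)
      qed
    qed
    then show ?thesis using card_Un_disjoint[of "?Ea \<union> ?Eb \<union> ?Ec \<union> ?EX \<union> ?Eab" ?Eac] fin fEX c4 cE by simp
  qed
  have c6: "card (?Ea \<union> ?Eb \<union> ?Ec \<union> ?EX \<union> ?Eab \<union> ?Eac \<union> ?Ebc) = card Ma + card Mb + card Mc + card ?EX + iab + iac + ibc"
  proof -
    have "(?Ea \<union> ?Eb \<union> ?Ec \<union> ?EX \<union> ?Eab \<union> ?Eac) \<inter> ?Ebc = {}"
    proof (rule ccontr)
      assume "(?Ea \<union> ?Eb \<union> ?Ec \<union> ?EX \<union> ?Eab \<union> ?Eac) \<inter> ?Ebc \<noteq> {}"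
      then obtain e where e1: "e \<in> ?Ea \<union> ?Eb \<union> ?Ec \<union> ?EX \<union> ?Eab \<union> ?Eac" and e2: "e \<in> ?Ebc" by (rule ne_obtain)
      have ee: "e = {b,c}" using e2 by simp
      from e1 show False
      proof (rule UnE)
        assume "e \<in> ?Ea \<union> ?Eb \<union> ?Ec \<union> ?EX \<union> ?Eab"
        then show False
        proof (rule UnE)
          assume hh: "e \<in> ?Ea \<union> ?Eb \<union> ?Ec \<union> ?EX" show False using inX[OF hh] ee aX by auto
        next
          assume "e \<in> ?Eab" then have "e = {a,b}" by simp
          then show False using ee abc by (simp add: doubleton_eq_iff)
        qed
      next
        assume "e \<in> ?Eac" then have "e = {a,c}" by simp
        then show False using ee abc by (simp add: doubleton_eq_iff)
      qed
    qed
    then show ?thesis using card_Un_disjoint[of "?Ea \<union> ?Eb \<union> ?Ec \<union> ?EX \<union> ?Eab \<union> ?Eac" ?Ebc] fin fEX c5 cE by simp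
  qed
  have sub: "?Ea \<union> ?Eb \<union> ?Ec \<union> ?EX \<union> ?Eab \<union> ?Eac \<union> ?Ebc \<subseteq> {e\<in>E. e \<subseteq> A}"
    using Aeq unfolding Ma_def Mb_def Mc_def nbrs_def adj_def by auto
  have "card (?Ea \<union> ?Eb \<union> ?Ec \<union> ?EX \<union> ?Eab \<union> ?Eac \<union> ?Ebc) \<le> edges_in E A" unfolding edges_in_def
    by (rule card_mono) (use fE sub in simp_all)
  then have tot: "card Ma + card Mb + card Mc + card ?EX + iab + iac + ibc \<le> 6" using c6 h k by simp
  have i1: "iab \<le> 1" "iac \<le> 1" "ibc \<le> 1" unfolding iab_def iac_def ibc_def by simp_all
  have ii: "iab = 1" "iac = 1" "ibc = 1" using tot da db dc d3 i1 by linarith+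
  have cM: "card Ma = 1" "card Mb = 1" "card Mc = 1" and cEX: "card ?EX = 0" using tot da db dc d3 ii by linarith+
  have EX0: "?EX = {}" using cEX fEX by simp
  have adjs: "adj E a b" "adj E a c" "adj E b c"
  proof -
    show "adj E a b" proof (rule ccontr) assume "\<not> adj E a b" then have "iab = 0" unfolding iab_def by simp
      then show False using ii by simp qed
    show "adj E a c" proof (rule ccontr) assume "\<not> adj E a c" then have "iac = 0" unfolding iac_def by simp
      then show False using ii by simp qed
    show "adj E b c" proof (rule ccontr) assume "\<not> adj E b c" then have "ibc = 0" unfolding ibc_def by simp
      then show False using ii by simp qed
  qed
  obtain p where p: "Ma = {p}" using cM(1) card_1_singletonE by blast
  obtain q where q: "Mb = {q}" using cM(2) card_1_singletonE by blast
  obtain r where r: "Mc = {r}" using cM(3) card_1_singletonE by blast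
  have cov: "?X \<subseteq> {p,q,r}"
  proof
    fix x assume x: "x \<in> ?X"
    obtain s where s: "s \<in> A - B" "adj E x s" using tc_cover[OF tc sep nt o3 x] by blast
    have "adj E s x" using s(2) adj_sym by metis
    then have "x \<in> Ma \<or> x \<in> Mb \<or> x \<in> Mc" using s(1) abc x unfolding Ma_def Mb_def Mc_def nbrs_def by auto
    then show "x \<in> {p,q,r}" using p q r by auto
  qed
  have Xeq: "?X = {p,q,r}" using cov MX p q r by auto
  have dpqr: "p \<noteq> q" "p \<noteq> r" "q \<noteq> r"
  proof -
    have "card {p,q,r} = 3" using Xeq o3 by simp
    then show "p \<noteq> q" "p \<noteq> r" "q \<noteq> r" by (auto simp: card_insert_if split: if_splits)
  qed
  have adjs2: "adj E a p" "adj E b q" "adj E c r" using p q r unfolding Ma_def Mb_def Mc_def nbrs_def by auto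
  have ed: "\<forall>e\<in>E. e \<subseteq> A \<longrightarrow> e \<in> {{a, p}, {b, q}, {c, r}, {a, b}, {b, c}, {a, c}}"
  proof (intro ballI impI)
    fix e assume eE: "e \<in> E" and eA: "e \<subseteq> A"
    show "e \<in> {{a, p}, {b, q}, {c, r}, {a, b}, {b, c}, {a, c}}"
    proof (cases "a \<in> e")
      case True
      then obtain w where w: "w \<noteq> a" "e = {a,w}" using edge_other[OF g eE] by blast
      have "w \<in> nbrs E a" using w eE unfolding nbrs_def adj_def by simp
      then have "w = b \<or> w = c \<or> w \<in> Ma" using w eA Aeq unfolding Ma_def by auto
      then show ?thesis using w p by auto
    next
      case na: False
      show ?thesis
      proof (cases "b \<in> e")
        case True
        then obtain w where w: "w \<noteq> b" "e = {b,w}" using edge_other[OF g eE] by blast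
        have "w \<in> nbrs E b" using w eE unfolding nbrs_def adj_def by simp
        then have "w = a \<or> w = c \<or> w \<in> Mb" using w eA Aeq unfolding Mb_def by auto
        then show ?thesis using w q by (auto simp: insert_commute)
      next
        case nb: False
        show ?thesis
        proof (cases "c \<in> e")
          case True
          then obtain w where w: "w \<noteq> c" "e = {c,w}" using edge_other[OF g eE] by blast
          have "w \<in> nbrs E c" using w eE unfolding nbrs_def adj_def by simp
          then have "w = a \<or> w = b \<or> w \<in> Mc" using w eA Aeq unfolding Mc_def by auto
          then show ?thesis using w r by (auto simp: insert_commute)
        next
          case False
          then have "e \<in> ?EX" using na nb eE eA Aeq by auto
          then show ?thesis using EX0 by blast
        qed
      qed
    qed
  qed
  show ?thesis
  proof (rule degI2[OF sep nt Xeq dpqr, of a b c])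
    show "a \<in> A" "b \<in> A" "c \<in> A" using Aeq by auto
    show "adj E a b" "adj E b c" "adj E a c" using adjs by auto
    show "a = p \<or> adj E a p" "b = q \<or> adj E b q" "c = r \<or> adj E c r" using adjs2 by auto
    show "A \<subseteq> {a, b, c, p, q, r}" using Aeq Xeq by auto
    show "\<forall>e\<in>E. e \<subseteq> A \<longrightarrow> e \<in> {{a, p}, {b, q}, {c, r}, {a, b}, {b, c}, {a, c}}" by (rule ed)
  qed
qed

lemma B2:
  assumes tc: "three_connected V E" and sep: "separation V E A B" and nt: "nontrivial_sep V A B"
    and o3: "card (A \<inter> B) = 3" and h: "edges_in E A \<le> card (A - B) + 3"
  shows "degenerate V E A B"
proof -
  have g: "graph V E" using tc tc_graph by blast
  have fA: "finite A" using sep_sub[OF sep] graph_fin[OF g] finite_subset by blast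
  have s: "3 * card (A - B) + (\<Sum>x\<in>A\<inter>B. card {e\<in>{e\<in>E. e \<subseteq> A}. x\<in>e}) \<le> 2 * edges_in E A"
    by (rule side_ineq[OF tc sep])
  have c: "3 \<le> (\<Sum>x\<in>A\<inter>B. card {e\<in>{e\<in>E. e \<subseteq> A}. x\<in>e})" by (rule cover_sum[OF tc sep nt o3])
  have k3: "card (A - B) \<le> 3" using s c h by linarith
  have k1: "card (A - B) \<ge> 1" using nontriv_ne[OF sep nt] fA by (simp add: Suc_le_eq card_gt_0_iff)
  have "card (A - B) = 1 \<or> card (A - B) = 2 \<or> card (A - B) = 3" using k1 k3 by linarith
  then show ?thesis using B2_k1[OF tc sep nt o3 h] B2_k2[OF tc sep nt o3 h] B2_k3[OF tc sep nt o3 h] by blast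
qed

definition ctr :: "'a \<Rightarrow> 'a \<Rightarrow> 'a \<Rightarrow> 'a \<Rightarrow> 'a" where
  "ctr v v1 v2 x = (if x = v1 \<or> x = v2 then v else x)"

locale split_ctx =
  fixes V :: "'a set" and E :: "'a set set" and v :: 'a and N1 N2 :: "'a set" and v1 v2 :: 'a
    and V' :: "'a set" and E' :: "'a set set"
  assumes g: "graph V E" and vV: "v \<in> V" and deg4: "4 \<le> card (nbrs E v)"
    and NU: "N1 \<union> N2 = nbrs E v" and ND: "N1 \<inter> N2 = {}" and cN1: "2 \<le> card N1" and cN2: "2 \<le> card N2"
    and v12: "v1 \<noteq> v2" and v1n: "v1 \<notin> V - {v}" and v2n: "v2 \<notin> V - {v}"
    and V'def: "V' = (V - {v}) \<union> {v1, v2}"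
    and E'def: "E' = {e\<in>E. v \<notin> e} \<union> {{v1, v2}} \<union> {{v1, u} | u. u \<in> N1} \<union> {{v2, u} | u. u \<in> N2}"
begin

lemma N_sub: "nbrs E v \<subseteq> V - {v}"
  using nbrs_sub[OF g] adj_ne[OF g] unfolding nbrs_def by blast

lemma N1_sub: "N1 \<subseteq> V - {v}" and N2_sub: "N2 \<subseteq> V - {v}"
  using N_sub NU by blast+

lemma v_notN: "v1 \<notin> N1" "v1 \<notin> N2" "v2 \<notin> N1" "v2 \<notin> N2"
  using N1_sub N2_sub v1n v2n by blast+

lemma fV: "finite V" using graph_fin[OF g] .

lemma fN: "finite N1" "finite N2" using N1_sub N2_sub fV finite_subset by blast+

lemma old_edge: "e \<in> E \<Longrightarrow> v \<notin> e \<Longrightarrow> v1 \<notin> e \<and> v2 \<notin> e"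
  using g v1n v2n unfolding graph_def by blast

lemma adjE_N: "adj E v u \<longleftrightarrow> u \<in> N1 \<or> u \<in> N2"
  using NU unfolding nbrs_def by blast

lemma adj'_iff: "adj E' x y \<longleftrightarrow> (adj E x y \<and> x \<noteq> v \<and> y \<noteq> v) \<or> {x,y} = {v1,v2}
    \<or> (\<exists>u\<in>N1. {x,y} = {v1,u}) \<or> (\<exists>u\<in>N2. {x,y} = {v2,u})"
  unfolding adj_def E'def by auto

lemma graph': "graph V' E'"
  unfolding graph_def
proof (rule conjI)
  show "finite V'" using fV V'def by simp
next
  show "\<forall>e\<in>E'. e \<subseteq> V' \<and> card e = 2"
  proof
  fix e assume e: "e \<in> E'"
  have gE: "e \<in> E \<Longrightarrow> e \<subseteq> V \<and> card e = 2" using g unfolding graph_def by blast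
  show "e \<subseteq> V' \<and> card e = 2"
  proof -
    consider (o) "e \<in> E" "v \<notin> e" | (m) "e = {v1,v2}" | (a) u where "u \<in> N1" "e = {v1,u}"
      | (b) u where "u \<in> N2" "e = {v2,u}" using e unfolding E'def by blast
    then show ?thesis
    proof cases
      case o then show ?thesis using gE V'def by auto
    next
      case m then show ?thesis using v12 V'def by auto
    next
      case a
      then have "u \<noteq> v1" using N1_sub v1n by blast
      then show ?thesis using a N1_sub V'def by auto
    next
      case b
      then have "u \<noteq> v2" using N2_sub v2n by blast
      then show ?thesis using b N2_sub V'def by auto
    qed
  qed
  qed
qed

lemma cardV': "card V' = card V + 1"
proof -
  have "V' = insert v1 (insert v2 (V - {v}))" using V'def by auto
  moreover have "v1 \<notin> insert v2 (V - {v})" "v2 \<notin> V - {v}" using v12 v1n v2n by auto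
  ultimately have "card V' = card (V - {v}) + 2" using fV by simp
  moreover have "card (V - {v}) = card V - 1" using vV fV by (simp add: card_Diff_singleton)
  moreover have "card V \<ge> 1" using vV fV card_gt_0_iff[of V] by auto
  ultimately show ?thesis by simp
qed

lemma nbrs'_v1: "nbrs E' v1 = insert v2 N1"
proof
  show "nbrs E' v1 \<subseteq> insert v2 N1"
  proof
    fix x assume "x \<in> nbrs E' v1"
    then have "adj E' v1 x" unfolding nbrs_def by simp
    then consider (o) "adj E v1 x" "v1 \<noteq> v" | (m) "{v1,x} = {v1,v2}" | (a) u where "u \<in> N1" "{v1,x} = {v1,u}"
      | (b) u where "u \<in> N2" "{v1,x} = {v2,u}" unfolding adj'_iff by blast
    then show "x \<in> insert v2 N1"
    proof cases
      case o then have "v1 \<in> V" using adj_V[OF g] by blast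
      then show ?thesis using o v1n by blast
    next
      case m then show ?thesis by (auto simp: doubleton_eq_iff)
    next
      case a then show ?thesis by (auto simp: doubleton_eq_iff)
    next
      case b then show ?thesis using v12 v_notN by (auto simp: doubleton_eq_iff)
    qed
  qed
next
  show "insert v2 N1 \<subseteq> nbrs E' v1" unfolding nbrs_def adj'_iff by blast
qed

lemma nbrs'_v2: "nbrs E' v2 = insert v1 N2"
proof
  show "nbrs E' v2 \<subseteq> insert v1 N2"
  proof
    fix x assume "x \<in> nbrs E' v2"
    then have "adj E' v2 x" unfolding nbrs_def by simp
    then consider (o) "adj E v2 x" "v2 \<noteq> v" | (m) "{v2,x} = {v1,v2}" | (a) u where "u \<in> N1" "{v2,x} = {v1,u}"
      | (b) u where "u \<in> N2" "{v2,x} = {v2,u}" unfolding adj'_iff by blast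
    then show "x \<in> insert v1 N2"
    proof cases
      case o then have "v2 \<in> V" using adj_V[OF g] by blast
      then show ?thesis using o v2n by blast
    next
      case m then show ?thesis by (auto simp: doubleton_eq_iff)
    next
      case a then show ?thesis using v12 v_notN by (auto simp: doubleton_eq_iff)
    next
      case b then show ?thesis by (auto simp: doubleton_eq_iff)
    qed
  qed
next
  show "insert v1 N2 \<subseteq> nbrs E' v2" unfolding nbrs_def adj'_iff by (auto simp: insert_commute)
qed

lemma c_V: "x \<in> V - {v} \<Longrightarrow> ctr v v1 v2 x = x"
  unfolding ctr_def using v1n v2n by auto

lemma c_v12: "ctr v v1 v2 v1 = v" "ctr v v1 v2 v2 = v"
  unfolding ctr_def by auto

lemma V'_cases: "y \<in> V' \<Longrightarrow> y \<in> V - {v} \<or> y = v1 \<or> y = v2"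
  using V'def by auto

lemma c_mem: assumes "A' \<subseteq> V'" "x \<in> V - {v}" shows "x \<in> ctr v v1 v2 ` A' \<longleftrightarrow> x \<in> A'"
proof
  assume "x \<in> ctr v v1 v2 ` A'"
  then obtain y where y: "y \<in> A'" "x = ctr v v1 v2 y" by blast
  have "y \<in> V - {v} \<or> y = v1 \<or> y = v2" using V'_cases y assms(1) by blast
  then show "x \<in> A'" using y assms(2) c_V c_v12 by auto
next
  assume "x \<in> A'" then show "x \<in> ctr v v1 v2 ` A'" using c_V[OF assms(2)] by (metis image_eqI)
qed

lemma c_memv: assumes "A' \<subseteq> V'" shows "v \<in> ctr v v1 v2 ` A' \<longleftrightarrow> v1 \<in> A' \<or> v2 \<in> A'"
proof
  assume "v \<in> ctr v v1 v2 ` A'"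
  then obtain y where y: "y \<in> A'" "v = ctr v v1 v2 y" by blast
  have "y \<in> V - {v} \<or> y = v1 \<or> y = v2" using V'_cases y assms(1) by blast
  then show "v1 \<in> A' \<or> v2 \<in> A'" using y c_V by auto
next
  assume "v1 \<in> A' \<or> v2 \<in> A'" then show "v \<in> ctr v v1 v2 ` A'" using c_v12 by (metis image_eqI)
qed

lemma c_sub: assumes "A' \<subseteq> V'" shows "ctr v v1 v2 ` A' \<subseteq> V"
proof
  fix x assume "x \<in> ctr v v1 v2 ` A'"
  then obtain y where y: "y \<in> A'" "x = ctr v v1 v2 y" by blast
  have "y \<in> V - {v} \<or> y = v1 \<or> y = v2" using V'_cases y assms(1) by blast
  then show "x \<in> V" using y c_V c_v12 vV by auto
qed

lemma c_cases: "x \<in> V \<Longrightarrow> x = v \<or> x \<in> V - {v}" by blast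

lemma sep_c:
  assumes sep: "separation V' E' A' B'"
  shows "separation V E (ctr v v1 v2 ` A') (ctr v v1 v2 ` B')"
proof -
  have AV: "A' \<subseteq> V'" "B' \<subseteq> V'" using sep_sub[OF sep] by auto
  have U: "A' \<union> B' = V'" using sep_U[OF sep] .
  let ?A = "ctr v v1 v2 ` A'" and ?B = "ctr v v1 v2 ` B'"
  have v1V': "v1 \<in> V'" "v2 \<in> V'" using V'def by auto
  show ?thesis unfolding separation_def
  proof (rule conjI)
    show "?A \<union> ?B = V"
    proof
      show "?A \<union> ?B \<subseteq> V" using c_sub AV by blast
    next
      show "V \<subseteq> ?A \<union> ?B"
      proof
        fix x assume x: "x \<in> V"
        show "x \<in> ?A \<union> ?B"
        proof (cases "x = v")
          case True then show ?thesis using c_memv AV U v1V' by blast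
        next
          case False then have "x \<in> V - {v}" using x by simp
          then show ?thesis using c_mem AV U V'def by auto
        qed
      qed
    qed
  next
    show "\<forall>x\<in>?A - ?B. \<forall>y\<in>?B - ?A. \<not> adj E x y"
    proof (intro ballI notI)
      fix x y assume x: "x \<in> ?A - ?B" and y: "y \<in> ?B - ?A" and a: "adj E x y"
      have xV: "x \<in> V" and yV: "y \<in> V" using x y c_sub AV by blast+
      have na: "\<not> adj E' p q" if "p \<in> A' - B'" "q \<in> B' - A'" for p q using sep_na[OF sep that] .
      show False
      proof (cases "x = v")
        case True
        then have yv: "y \<noteq> v" using x y by blast
        then have yV': "y \<in> V - {v}" using yV by simp
        have yB: "y \<in> B' - A'" using y c_mem[OF AV(1) yV'] c_mem[OF AV(2) yV'] by blast
        have "v \<notin> ?B" using x True by simp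
        then have "v1 \<notin> B'" "v2 \<notin> B'" using c_memv[OF AV(2)] by simp_all
        then have v1A: "v1 \<in> A' - B'" "v2 \<in> A' - B'" using U v1V' by blast+
        have "y \<in> N1 \<or> y \<in> N2" using a True adjE_N by simp
        then show False
        proof
          assume "y \<in> N1" then have "adj E' v1 y" unfolding adj'_iff by blast
          then show False using na[OF v1A(1) yB] by simp
        next
          assume "y \<in> N2" then have "adj E' v2 y" unfolding adj'_iff by blast
          then show False using na[OF v1A(2) yB] by simp
        qed
      next
        case xv: False
        then have xV': "x \<in> V - {v}" using xV by simp
        have xA: "x \<in> A' - B'" using x c_mem[OF AV(1) xV'] c_mem[OF AV(2) xV'] by blast
        show False
        proof (cases "y = v")
          case True
          have "v \<notin> ?A" using y True by simp
          then have "v1 \<notin> A'" "v2 \<notin> A'" using c_memv[OF AV(1)] by simp_all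
          then have v1B: "v1 \<in> B' - A'" "v2 \<in> B' - A'" using U v1V' by blast+
          have "x \<in> N1 \<or> x \<in> N2" using a True adjE_N adj_sym by metis
          then show False
          proof
            assume "x \<in> N1" then have "adj E' x v1" unfolding adj'_iff by (auto simp: insert_commute)
            then show False using na[OF xA v1B(1)] by simp
          next
            assume "x \<in> N2" then have "adj E' x v2" unfolding adj'_iff by (auto simp: insert_commute)
            then show False using na[OF xA v1B(2)] by simp
          qed
        next
          case False
          then have yV': "y \<in> V - {v}" using yV by simp
          have yB: "y \<in> B' - A'" using y c_mem[OF AV(1) yV'] c_mem[OF AV(2) yV'] by blast
          have "adj E' x y" unfolding adj'_iff using a xv False by blast
          then show False using na[OF xA yB] by simp
        qed
      qed
    qed
  qed
qed

lemma adj'_v12: "adj E' v1 v2" "adj E' v2 v1" unfolding adj'_iff by (auto simp: insert_commute)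

lemma fV': "finite V'" using V'def fV by simp

lemma int_c:
  assumes sep: "separation V' E' A' B'"
  shows "ctr v v1 v2 ` A' \<inter> ctr v v1 v2 ` B' \<subseteq> ctr v v1 v2 ` (A' \<inter> B')"
proof
  have AV: "A' \<subseteq> V'" "B' \<subseteq> V'" using sep_sub[OF sep] by auto
  have U: "A' \<union> B' = V'" using sep_U[OF sep] .
  have v1V': "v1 \<in> V'" "v2 \<in> V'" using V'def by auto
  fix x assume x: "x \<in> ctr v v1 v2 ` A' \<inter> ctr v v1 v2 ` B'"
  have xV: "x \<in> V" using x c_sub AV by blast
  show "x \<in> ctr v v1 v2 ` (A' \<inter> B')"
  proof (cases "x = v")
    case True
    have a: "v1 \<in> A' \<or> v2 \<in> A'" "v1 \<in> B' \<or> v2 \<in> B'" using x True c_memv AV by auto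
    have "v1 \<in> A' \<inter> B' \<or> v2 \<in> A' \<inter> B'"
    proof (rule ccontr)
      assume n: "\<not> (v1 \<in> A' \<inter> B' \<or> v2 \<in> A' \<inter> B')"
      then have "(v1 \<in> A' - B' \<and> v2 \<in> B' - A') \<or> (v2 \<in> A' - B' \<and> v1 \<in> B' - A')" using a by blast
      then show False using sep_na[OF sep] adj'_v12 by blast
    qed
    then show ?thesis using True c_v12 by (metis image_eqI)
  next
    case False
    then have xV': "x \<in> V - {v}" using xV by simp
    then have "x \<in> A' \<inter> B'" using x c_mem[OF AV(1) xV'] c_mem[OF AV(2) xV'] by blast
    then show ?thesis using c_V[OF xV'] by (metis image_eqI)
  qed
qed

lemma card_int_c:
  assumes sep: "separation V' E' A' B'"
  shows "card (ctr v v1 v2 ` A' \<inter> ctr v v1 v2 ` B') \<le> card (A' \<inter> B')"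
proof -
  have f: "finite (A' \<inter> B')" using sep_sub[OF sep] fV' finite_subset by blast
  have "card (ctr v v1 v2 ` A' \<inter> ctr v v1 v2 ` B') \<le> card (ctr v v1 v2 ` (A' \<inter> B'))"
    by (rule card_mono) (use f int_c[OF sep] in auto)
  also have "\<dots> \<le> card (A' \<inter> B')" by (rule card_image_le[OF f])
  finally show ?thesis .
qed

lemma card_int_c2:
  assumes sep: "separation V' E' A' B'" and b: "v1 \<in> A' \<inter> B'" "v2 \<in> A' \<inter> B'"
  shows "card (ctr v v1 v2 ` A' \<inter> ctr v v1 v2 ` B') + 1 \<le> card (A' \<inter> B')"
proof -
  let ?X = "A' \<inter> B'"
  have f: "finite ?X" using sep_sub[OF sep] fV' finite_subset by blast
  have eq: "ctr v v1 v2 ` ?X = ctr v v1 v2 ` (?X - {v2})"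
  proof
    show "ctr v v1 v2 ` ?X \<subseteq> ctr v v1 v2 ` (?X - {v2})"
    proof
      fix y assume "y \<in> ctr v v1 v2 ` ?X"
      then obtain z where z: "z \<in> ?X" "y = ctr v v1 v2 z" by blast
      show "y \<in> ctr v v1 v2 ` (?X - {v2})"
      proof (cases "z = v2")
        case True
        then have "y = ctr v v1 v2 v1" using z c_v12 by simp
        then show ?thesis using b v12 by blast
      next
        case False then show ?thesis using z by blast
      qed
    qed
  qed auto
  have "card (ctr v v1 v2 ` A' \<inter> ctr v v1 v2 ` B') \<le> card (ctr v v1 v2 ` ?X)"
    by (rule card_mono) (use f int_c[OF sep] in auto)
  also have "\<dots> \<le> card (?X - {v2})" unfolding eq by (rule card_image_le) (use f in simp)
  also have "\<dots> = card ?X - 1" using b f by (simp add: card_Diff_singleton)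
  finally show ?thesis using b f card_gt_0_iff[of ?X] by fastforce
qed

lemma c_full:
  assumes sep: "separation V' E' A' B'" and n: "A' \<noteq> V'" and f: "ctr v v1 v2 ` A' = V"
  shows "v1 \<notin> A' \<or> v2 \<notin> A'"
proof (rule ccontr)
  have AV: "A' \<subseteq> V'" using sep_sub[OF sep] by auto
  assume "\<not> (v1 \<notin> A' \<or> v2 \<notin> A')"
  then have b: "v1 \<in> A'" "v2 \<in> A'" by auto
  have "V' \<subseteq> A'"
  proof
    fix y assume y: "y \<in> V'"
    then have "y \<in> V - {v} \<or> y = v1 \<or> y = v2" by (rule V'_cases)
    then show "y \<in> A'"
    proof (elim disjE)
      assume yv: "y \<in> V - {v}"
      then have "y \<in> ctr v v1 v2 ` A'" using f by auto
      then show ?thesis using c_mem[OF AV yv] by simp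
    qed (use b in auto)
  qed
  then show False using n AV by auto
qed

lemma TC_core:
  assumes sep: "separation V' E' A' B'" and f: "ctr v v1 v2 ` A' = V" and wA: "w \<notin> A'"
    and ww: "(w = v1 \<and> w' = v2 \<and> M = N1 \<and> M' = N2) \<or> (w = v2 \<and> w' = v1 \<and> M = N2 \<and> M' = N1)"
  shows "3 \<le> card (A' \<inter> B') \<and> (card (A' \<inter> B') = 3 \<longrightarrow> edges_in E' B' \<le> card (B' - A') + 3)"
proof -
  have g': "graph V' E'" by (rule graph')
  have nw: "nbrs E' w = insert w' M" and nw': "nbrs E' w' = insert w M'" and MM: "M \<inter> M' = {}"
    and cM: "2 \<le> card M" and fM: "finite M" and MV: "M \<subseteq> V - {v}"
    and wV': "w \<in> V'" "w' \<in> V'" and wn: "w \<notin> V - {v}" "w' \<notin> V - {v}" and wM: "w' \<notin> M" "w \<notin> M"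
    using ww nbrs'_v1 nbrs'_v2 ND cN1 cN2 fN N1_sub N2_sub V'def v1n v2n v_notN by (auto simp: Int_commute)
  have AV: "A' \<subseteq> V'" "B' \<subseteq> V'" using sep_sub[OF sep] by auto
  have U: "A' \<union> B' = V'" using sep_U[OF sep] .
  have wB: "w \<in> B' - A'" using wA wV' U by blast
  have "v1 \<in> A' \<or> v2 \<in> A'" using c_memv[OF AV(1)] f vV by simp
  then have w'A: "w' \<in> A'" using ww wA by blast
  have nbB: "nbrs E' w \<subseteq> B'"
    using sep_nb[OF sep_sym[OF sep] g' wB] unfolding nbrs_def by blast
  have MA: "M \<subseteq> A'"
  proof
    fix y assume "y \<in> M"
    then have yv: "y \<in> V - {v}" using MV by blast
    then have "y \<in> ctr v v1 v2 ` A'" using f by blast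
    then show "y \<in> A'" using c_mem[OF AV(1) yv] by simp
  qed
  have subX: "insert w' M \<subseteq> A' \<inter> B'" using nbB nw MA w'A by auto
  have fX: "finite (A' \<inter> B')" using AV fV' finite_subset by blast
  have cI: "card (insert w' M) = card M + 1" using fM wM by simp
  have c3: "3 \<le> card (A' \<inter> B')" using card_mono[OF fX subX] cI cM by simp
  have rest: "edges_in E' B' \<le> card (B' - A') + 3" if c: "card (A' \<inter> B') = 3"
  proof -
    have Xeq: "A' \<inter> B' = insert w' M" using card_seteq[OF fX subX] cI cM c by simp
    then have cM2: "card M = 2" using cI c by simp
    then obtain p q where pq: "M = {p,q}" "p \<noteq> q" by (meson card_2_iff)
    have BA: "B' - A' = {w}"
    proof
      show "B' - A' \<subseteq> {w}"
      proof
        fix y assume y: "y \<in> B' - A'"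
        then have "y \<in> V - {v} \<or> y = v1 \<or> y = v2" using V'_cases AV by blast
        moreover have "y \<notin> V - {v}"
        proof
          assume yv: "y \<in> V - {v}"
          then have "y \<in> ctr v v1 v2 ` A'" using f by blast
          then show False using c_mem[OF AV(1) yv] y by simp
        qed
        ultimately show "y \<in> {w}" using ww y w'A by auto
      qed
    qed (use wB in auto)
    have Beq: "B' = {w, w', p, q}" using BA Xeq pq by auto
    have sub: "{e\<in>E'. e \<subseteq> B'} \<subseteq> {{w,w'},{w,p},{w,q},{p,q}}"
    proof
      fix e assume e: "e \<in> {e\<in>E'. e \<subseteq> B'}"
      then have eE: "e \<in> E'" and eB: "e \<subseteq> B'" by auto
      have c2: "card e = 2" using g' eE unfolding graph_def by blast
      show "e \<in> {{w,w'},{w,p},{w,q},{p,q}}"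
      proof (cases "w \<in> e")
        case True
        then obtain y where y: "e = {w,y}" using edge_other[OF g' eE] by blast
        then have "y \<in> nbrs E' w" using eE unfolding nbrs_def adj_def by simp
        then show ?thesis using y nw pq by auto
      next
        case nw1: False
        show ?thesis
        proof (cases "w' \<in> e")
          case True
          then obtain y where y: "e = {w',y}" "y \<noteq> w'" using edge_other[OF g' eE] by blast
          then have "y \<in> nbrs E' w'" using eE unfolding nbrs_def adj_def by simp
          then have "y = w \<or> y \<in> M'" using nw' by simp
          moreover have "y \<in> {p,q}" using y eB Beq nw1 by auto
          ultimately show ?thesis using nw1 y MM pq by auto
        next
          case False
          then have "e \<subseteq> {p,q}" using eB Beq nw1 by auto
          then have "e = {p,q}" using card_seteq[of "{p,q}" e] c2 pq by simp
          then show ?thesis by simp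
        qed
      qed
    qed
    have "edges_in E' B' \<le> card {{w,w'},{w,p},{w,q},{p,q}}" unfolding edges_in_def
      by (rule card_mono[OF _ sub]) simp
    also have "\<dots> \<le> 4" by (simp add: card_insert_if)
    finally show ?thesis using BA by simp
  qed
  show ?thesis using c3 rest by blast
qed

lemma TC:
  assumes sep: "separation V' E' A' B'" and n: "A' \<noteq> V'" and f: "ctr v v1 v2 ` A' = V"
  shows "3 \<le> card (A' \<inter> B') \<and> (card (A' \<inter> B') = 3 \<longrightarrow> edges_in E' B' \<le> card (B' - A') + 3)"
proof -
  from c_full[OF sep n f] show ?thesis
  proof
    assume "v1 \<notin> A'" then show ?thesis using TC_core[OF sep f, of v1 v2 N1 N2] by simp
  next
    assume "v2 \<notin> A'" then show ?thesis using TC_core[OF sep f, of v2 v1 N2 N1] by simp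
  qed
qed

lemma card_ins_le: "finite S \<Longrightarrow> card (insert x S) \<le> card S + 1"
  by (simp add: card_insert_if)

lemma edges_lift1:
  assumes sep: "separation V' E' A' B'"
  shows "edges_in E' A' \<le> edges_in E (ctr v v1 v2 ` A') + (if v1 \<in> A' \<and> v2 \<in> A' then 1 else 0)"
proof -
  let ?c = "ctr v v1 v2"
  let ?F' = "{e\<in>E'. e \<subseteq> A'}" and ?F = "{e\<in>E. e \<subseteq> ?c ` A'}"
  let ?G = "?F' - {{v1,v2}}"
  have fE: "finite E" "finite E'" using finE[OF g] finE[OF graph'] by auto
  have cls: "(e \<in> E \<and> v \<notin> e \<and> ?c ` e = e) \<or> (\<exists>u\<in>N1. e = {v1,u} \<and> ?c ` e = {v,u}) \<or> (\<exists>u\<in>N2. e = {v2,u} \<and> ?c ` e = {v,u})"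
    if e: "e \<in> E' - {{v1,v2}}" for e
  proof -
    consider (o) "e \<in> E" "v \<notin> e" | (m) "e = {v1,v2}" | (a) u where "u \<in> N1" "e = {v1,u}"
      | (b) u where "u \<in> N2" "e = {v2,u}" using e unfolding E'def by blast
    then show ?thesis
    proof cases
      case o
      have "\<forall>x\<in>e. ?c x = x" using o old_edge[OF o] unfolding ctr_def by auto
      then have "?c ` e = e" by simp
      then show ?thesis using o by blast
    next
      case m then show ?thesis using e by simp
    next
      case a
      have "u \<in> V - {v}" using a N1_sub by blast
      then have "?c u = u" by (rule c_V)
      then have "?c ` e = {v,u}" using a c_v12 by simp
      then show ?thesis using a by blast
    next
      case b
      have "u \<in> V - {v}" using b N2_sub by blast
      then have "?c u = u" by (rule c_V)
      then have "?c ` e = {v,u}" using b c_v12 by simp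
      then show ?thesis using b by blast
    qed
  qed
  have inj: "inj_on (\<lambda>e. ?c ` e) ?G"
  proof (rule inj_onI)
    fix e1 e2 assume e1: "e1 \<in> ?G" and e2: "e2 \<in> ?G" and eq: "?c ` e1 = ?c ` e2"
    have E1: "e1 \<in> E' - {{v1,v2}}" and E2: "e2 \<in> E' - {{v1,v2}}" using e1 e2 by auto
    have nv: "u \<noteq> v" if "u \<in> N1 \<or> u \<in> N2" for u using that N1_sub N2_sub by blast
    from cls[OF E1] show "e1 = e2"
    proof (elim disjE bexE conjE)
      assume o1: "e1 \<in> E" "v \<notin> e1" "?c ` e1 = e1"
      from cls[OF E2] show "e1 = e2"
      proof (elim disjE bexE conjE)
        assume "e2 \<in> E" "v \<notin> e2" "?c ` e2 = e2" then show ?thesis using o1 eq by simp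
      next
        fix u assume "u \<in> N1" "e2 = {v1,u}" "?c ` e2 = {v,u}" then show ?thesis using o1 eq by auto
      next
        fix u assume "u \<in> N2" "e2 = {v2,u}" "?c ` e2 = {v,u}" then show ?thesis using o1 eq by auto
      qed
    next
      fix u1 assume a1: "u1 \<in> N1" "e1 = {v1,u1}" "?c ` e1 = {v,u1}"
      from cls[OF E2] show "e1 = e2"
      proof (elim disjE bexE conjE)
        assume "e2 \<in> E" "v \<notin> e2" "?c ` e2 = e2" then show ?thesis using a1 eq by auto
      next
        fix u assume "u \<in> N1" "e2 = {v1,u}" "?c ` e2 = {v,u}"
        then show ?thesis using a1 eq nv by (auto simp: doubleton_eq_iff)
      next
        fix u assume u: "u \<in> N2" "e2 = {v2,u}" "?c ` e2 = {v,u}"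
        then have "u = u1" using a1 eq nv by (auto simp: doubleton_eq_iff)
        then show ?thesis using u a1 ND by blast
      qed
    next
      fix u1 assume a1: "u1 \<in> N2" "e1 = {v2,u1}" "?c ` e1 = {v,u1}"
      from cls[OF E2] show "e1 = e2"
      proof (elim disjE bexE conjE)
        assume "e2 \<in> E" "v \<notin> e2" "?c ` e2 = e2" then show ?thesis using a1 eq by auto
      next
        fix u assume u: "u \<in> N1" "e2 = {v1,u}" "?c ` e2 = {v,u}"
        then have "u = u1" using a1 eq nv by (auto simp: doubleton_eq_iff)
        then show ?thesis using u a1 ND by blast
      next
        fix u assume "u \<in> N2" "e2 = {v2,u}" "?c ` e2 = {v,u}"
        then show ?thesis using a1 eq nv by (auto simp: doubleton_eq_iff)
      qed
    qed
  qed
  have img: "(\<lambda>e. ?c ` e) ` ?G \<subseteq> ?F"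
  proof
    fix f assume "f \<in> (\<lambda>e. ?c ` e) ` ?G"
    then obtain e where e: "e \<in> ?G" "f = ?c ` e" by blast
    have eA: "e \<subseteq> A'" using e by simp
    have fA: "f \<subseteq> ?c ` A'" using e eA by auto
    have "e \<in> E' - {{v1,v2}}" using e by simp
    from cls[OF this] have "f \<in> E"
    proof (elim disjE bexE conjE)
      assume "e \<in> E" "v \<notin> e" "?c ` e = e" then show ?thesis using e by simp
    next
      fix u assume "u \<in> N1" "e = {v1,u}" "?c ` e = {v,u}"
      then show ?thesis using e adjE_N unfolding adj_def by auto
    next
      fix u assume "u \<in> N2" "e = {v2,u}" "?c ` e = {v,u}"
      then show ?thesis using e adjE_N unfolding adj_def by auto
    qed
    then show "f \<in> ?F" using fA by simp
  qed
  have fG: "finite ?G" using fE by simp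
  have "card ?G = card ((\<lambda>e. ?c ` e) ` ?G)" using card_image[OF inj] by simp
  also have "\<dots> \<le> card ?F" by (rule card_mono[OF _ img]) (use fE in simp)
  finally have cG: "card ?G \<le> edges_in E (?c ` A')" unfolding edges_in_def .
  have "card ?F' \<le> card ?G + (if v1 \<in> A' \<and> v2 \<in> A' then 1 else 0)"
  proof (cases "v1 \<in> A' \<and> v2 \<in> A'")
    case True
    have "card ?F' \<le> card (insert {v1,v2} ?G)" by (rule card_mono) (use fE in auto)
    also have "\<dots> \<le> card ?G + 1" using card_ins_le[OF fG] .
    finally show ?thesis using True by simp
  next
    case False
    then have "?F' = ?G" by auto
    then show ?thesis by simp
  qed
  then show ?thesis using cG unfolding edges_in_def by simp
qed

lemma card_diff_c:
  assumes sep: "separation V' E' A' B'" and nb: "\<not> (v1 \<in> A' \<inter> B' \<and> v2 \<in> A' \<inter> B')"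
  shows "card (ctr v v1 v2 ` A' - ctr v v1 v2 ` B') + (if v1 \<in> A' \<and> v2 \<in> A' then 1 else 0) = card (A' - B')"
proof -
  let ?c = "ctr v v1 v2"
  have AV: "A' \<subseteq> V'" "B' \<subseteq> V'" using sep_sub[OF sep] by auto
  have U: "A' \<union> B' = V'" using sep_U[OF sep] .
  have v1V': "v1 \<in> V'" "v2 \<in> V'" using V'def by auto
  define R where "R = A' - B' - {v1,v2}"
  define P where "P = (v1 \<in> A' - B' \<and> v2 \<in> A' - B')"
  have RV: "R \<subseteq> V - {v}" unfolding R_def using AV V'_cases by blast
  have fR: "finite R" using RV fV finite_subset by blast
  have D: "?c ` A' - ?c ` B' = R \<union> {x. x = v \<and> P}"
  proof
    show "?c ` A' - ?c ` B' \<subseteq> R \<union> {x. x = v \<and> P}"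
    proof
      fix x assume x: "x \<in> ?c ` A' - ?c ` B'"
      have xV: "x \<in> V" using x c_sub AV by blast
      show "x \<in> R \<union> {x. x = v \<and> P}"
      proof (cases "x = v")
        case True
        have "v1 \<in> A' \<or> v2 \<in> A'" "v1 \<notin> B'" "v2 \<notin> B'" using x True c_memv[OF AV(1)] c_memv[OF AV(2)] by auto
        then have P using U v1V' unfolding P_def by blast
        then show ?thesis using True by simp
      next
        case False
        then have xV': "x \<in> V - {v}" using xV by simp
        then have "x \<in> A' - B'" using x c_mem[OF AV(1) xV'] c_mem[OF AV(2) xV'] by blast
        moreover have "x \<noteq> v1" "x \<noteq> v2" using xV' v1n v2n by auto
        ultimately show ?thesis unfolding R_def by simp
      qed
    qed
  next
    show "R \<union> {x. x = v \<and> P} \<subseteq> ?c ` A' - ?c ` B'"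
    proof
      fix x assume x: "x \<in> R \<union> {x. x = v \<and> P}"
      then show "x \<in> ?c ` A' - ?c ` B'"
      proof
        assume xR: "x \<in> R"
        then have xV': "x \<in> V - {v}" using RV by blast
        then show ?thesis using xR c_mem[OF AV(1) xV'] c_mem[OF AV(2) xV'] unfolding R_def by blast
      next
        assume "x \<in> {x. x = v \<and> P}"
        then have "x = v" P by auto
        then show ?thesis using c_memv[OF AV(1)] c_memv[OF AV(2)] unfolding P_def by auto
      qed
    qed
  qed
  have vR: "v \<notin> R" using RV by blast
  have c1: "card (?c ` A' - ?c ` B') = card R + (if P then 1 else 0)"
    unfolding D using fR vR by (cases P) auto
  have D2: "A' - B' = R \<union> ({v1,v2} \<inter> (A' - B'))" unfolding R_def by auto
  have c2a: "card (R \<union> ({v1,v2} \<inter> (A' - B'))) = card R + card ({v1,v2} \<inter> (A' - B'))"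
    by (rule card_Un_disjoint) (use fR R_def in auto)
  have c2: "card (A' - B') = card R + card ({v1,v2} \<inter> (A' - B'))"
    using c2a by (simp only: D2[symmetric])
  have na: "\<not> (v1 \<in> A' - B' \<and> v2 \<in> B' - A')" "\<not> (v2 \<in> A' - B' \<and> v1 \<in> B' - A')"
    using sep_na[OF sep] adj'_v12 by blast+
  have u1: "v1 \<in> A' \<or> v1 \<in> B'" "v2 \<in> A' \<or> v2 \<in> B'" using U v1V' by auto
  have "(if P then 1 else 0) + (if v1 \<in> A' \<and> v2 \<in> A' then 1 else 0) = card ({v1,v2} \<inter> (A' - B'))"
    unfolding P_def using na u1 nb v12
    by (cases "v1 \<in> A'"; cases "v1 \<in> B'"; cases "v2 \<in> A'"; cases "v2 \<in> B'") simp_all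
  then show ?thesis using c1 c2 by simp
qed

lemma edges_lift:
  assumes sep: "separation V' E' A' B'" and nb: "\<not> (v1 \<in> A' \<inter> B' \<and> v2 \<in> A' \<inter> B')"
    and h: "edges_in E (ctr v v1 v2 ` A') \<le> card (ctr v v1 v2 ` A' - ctr v v1 v2 ` B') + 3"
  shows "edges_in E' A' \<le> card (A' - B') + 3"
  using edges_lift1[OF sep] card_diff_c[OF sep nb] h by simp

end

definition Inv :: "'a set \<Rightarrow> 'a set set \<Rightarrow> bool" where
  "Inv V E \<longleftrightarrow> three_connected V E \<and>
     (\<forall>A B. separation V E A B \<and> nontrivial_sep V A B \<and> sep_order A B = 3 \<longrightarrow>
        edges_in E A \<le> card (A - B) + 3 \<or> edges_in E B \<le> card (B - A) + 3)"

context split_ctx begin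

lemma Inv_step:
  assumes I: "Inv V E"
  shows "Inv V' E'"
proof -
  have tc: "three_connected V E" using I unfolding Inv_def by simp
  have IH: "\<And>A B. separation V E A B \<Longrightarrow> nontrivial_sep V A B \<Longrightarrow> sep_order A B = 3 \<Longrightarrow>
        edges_in E A \<le> card (A - B) + 3 \<or> edges_in E B \<le> card (B - A) + 3"
    using I unfolding Inv_def by blast
  have c4: "card V \<ge> 4" using tc unfolding three_connected_def by simp
  let ?c = "ctr v v1 v2"
  have key: "3 \<le> card (A' \<inter> B') \<and> (card (A' \<inter> B') = 3 \<longrightarrow>
       edges_in E' A' \<le> card (A' - B') + 3 \<or> edges_in E' B' \<le> card (B' - A') + 3)"
    if sep: "separation V' E' A' B'" and nt: "nontrivial_sep V' A' B'" for A' B'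
  proof -
    have sepc: "separation V E (?c ` A') (?c ` B')" by (rule sep_c[OF sep])
    have sep2: "separation V' E' B' A'" by (rule sep_sym[OF sep])
    have nA: "A' \<noteq> V'" and nB: "B' \<noteq> V'" using nt unfolding nontrivial_sep_def by auto
    show ?thesis
    proof (cases "v1 \<in> A' \<inter> B' \<and> v2 \<in> A' \<inter> B'")
      case True
      have "?c ` A' \<noteq> V" using c_full[OF sep nA] True by blast
      moreover have "?c ` B' \<noteq> V" using c_full[OF sep2 nB] True by blast
      ultimately have ntc: "nontrivial_sep V (?c ` A') (?c ` B')" unfolding nontrivial_sep_def by simp
      have "3 \<le> card (?c ` A' \<inter> ?c ` B')" using tc_sep[OF tc sepc ntc] unfolding sep_order_def .
      moreover have "card (?c ` A' \<inter> ?c ` B') + 1 \<le> card (A' \<inter> B')" using card_int_c2[OF sep] True by blast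
      ultimately show ?thesis by simp
    next
      case nb: False
      show ?thesis
      proof (cases "?c ` A' = V")
        case True
        then show ?thesis using TC[OF sep nA] by blast
      next
        case fA: False
        show ?thesis
        proof (cases "?c ` B' = V")
          case True
          then show ?thesis using TC[OF sep2 nB] by (simp add: Int_commute)
        next
          case False
          then have ntc: "nontrivial_sep V (?c ` A') (?c ` B')" using fA unfolding nontrivial_sep_def by simp
          have l: "3 \<le> card (?c ` A' \<inter> ?c ` B')" using tc_sep[OF tc sepc ntc] unfolding sep_order_def .
          have u: "card (?c ` A' \<inter> ?c ` B') \<le> card (A' \<inter> B')" by (rule card_int_c[OF sep])
          have "edges_in E' A' \<le> card (A' - B') + 3 \<or> edges_in E' B' \<le> card (B' - A') + 3"
            if c3: "card (A' \<inter> B') = 3"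
          proof -
            have "sep_order (?c ` A') (?c ` B') = 3" unfolding sep_order_def using l u c3 by simp
            then have "edges_in E (?c ` A') \<le> card (?c ` A' - ?c ` B') + 3 \<or>
                       edges_in E (?c ` B') \<le> card (?c ` B' - ?c ` A') + 3" using IH[OF sepc ntc] by simp
            then show ?thesis
            proof
              assume "edges_in E (?c ` A') \<le> card (?c ` A' - ?c ` B') + 3"
              then show ?thesis using edges_lift[OF sep nb] by simp
            next
              assume h: "edges_in E (?c ` B') \<le> card (?c ` B' - ?c ` A') + 3"
              have nb2: "\<not> (v1 \<in> B' \<inter> A' \<and> v2 \<in> B' \<inter> A')" using nb by blast
              show ?thesis using edges_lift[OF sep2 nb2 h] by simp
            qed
          qed
          then show ?thesis using l u by simp
        qed
      qed
    qed
  qed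
  have tc': "three_connected V' E'" unfolding three_connected_def
  proof (intro conjI allI impI)
    show "graph V' E'" by (rule graph')
    show "4 \<le> card V'" using cardV' c4 by simp
    fix A' B' assume "separation V' E' A' B' \<and> nontrivial_sep V' A' B'"
    then show "3 \<le> sep_order A' B'" using key unfolding sep_order_def by blast
  qed
  show ?thesis unfolding Inv_def
  proof (intro conjI allI impI)
    show "three_connected V' E'" by (rule tc')
    fix A' B' assume "separation V' E' A' B' \<and> nontrivial_sep V' A' B' \<and> sep_order A' B' = 3"
    then show "edges_in E' A' \<le> card (A' - B') + 3 \<or> edges_in E' B' \<le> card (B' - A') + 3"
      using key unfolding sep_order_def by blast
  qed
qed

end
lemma split_Inv:
  assumes s: "split_step V E V' E'" and I: "Inv V E"
  shows "Inv V' E'"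
proof -
  have g: "graph V E" using I tc_graph unfolding Inv_def by blast
  obtain v N1 N2 v1 v2 where h: "v \<in> V \<and> card (nbrs E v) \<ge> 4 \<and>
     N1 \<union> N2 = nbrs E v \<and> N1 \<inter> N2 = {} \<and> card N1 \<ge> 2 \<and> card N2 \<ge> 2 \<and>
     v1 \<noteq> v2 \<and> v1 \<notin> V - {v} \<and> v2 \<notin> V - {v} \<and>
     V' = (V - {v}) \<union> {v1, v2} \<and>
     E' = {e\<in>E. v \<notin> e} \<union> {{v1, v2}} \<union> {{v1, u} | u. u \<in> N1} \<union> {{v2, u} | u. u \<in> N2}"
    using s unfolding split_step_def by (elim exE) (rule that)
  have "split_ctx V E v N1 N2 v1 v2 V' E'"
    using g h unfolding split_ctx_def by (elim conjE) (intro conjI; assumption)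
  then interpret split_ctx V E v N1 N2 v1 v2 V' E' .
  show ?thesis by (rule Inv_step[OF I])
qed

lemma expansion_Inv:
  assumes I: "Inv H0 F0" and ex: "expansion H0 F0 G E"
  shows "Inv G E"
proof -
  have "(\<lambda>(X, F) (Y, H). split_step X F Y H)\<^sup>*\<^sup>* (H0, F0) (G, E)" using ex unfolding expansion_def .
  then have "Inv (fst (G, E)) (snd (G, E))"
  proof (induction rule: rtranclp_induct)
    case base then show ?case using I by simp
  next
    case (step y z)
    obtain Y H where y: "y = (Y, H)" by (cases y)
    obtain Z K where z: "z = (Z, K)" by (cases z)
    have "split_step Y H Z K" using step.hyps(2) y z by simp
    moreover have "Inv Y H" using step.IH y by simp
    ultimately show ?case using split_Inv z by simp
  qed
  then show ?thesis by simp
qed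

lemma w4_Inv:
  assumes w: "weakly_4_connected V E"
  shows "Inv V E"
proof -
  have tc: "three_connected V E" using w unfolding weakly_4_connected_def by simp
  have fV: "finite V" using graph_fin[OF tc_graph[OF tc]] .
  show ?thesis unfolding Inv_def
  proof (intro conjI allI impI)
    show "three_connected V E" by (rule tc)
    fix A B assume a: "separation V E A B \<and> nontrivial_sep V A B \<and> sep_order A B = 3"
    then have sep: "separation V E A B" and nt: "nontrivial_sep V A B" and o: "sep_order A B \<le> 3" by auto
    have W: "\<forall>A B. separation V E A B \<and> sep_order A B \<le> 3 \<longrightarrow> edges_in E A \<le> 4 \<or> edges_in E B \<le> 4"
      using w unfolding weakly_4_connected_def by (elim conjE)
    have e4: "edges_in E A \<le> 4 \<or> edges_in E B \<le> 4" using W sep o by blast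
    have ne: "A - B \<noteq> {}" "B - A \<noteq> {}" using nontriv_ne[OF sep nt] by auto
    have fAB: "finite (A - B)" "finite (B - A)" using sep_sub[OF sep] fV finite_subset by blast+
    have k: "card (A - B) \<ge> 1" "card (B - A) \<ge> 1"
      using card_gt_0_iff[of "A - B"] card_gt_0_iff[of "B - A"] ne fAB by linarith+
    show "edges_in E A \<le> card (A - B) + 3 \<or> edges_in E B \<le> card (B - A) + 3"
      using e4 k by linarith
  qed
qed

theorem lemma4p2:
  fixes H0 G :: "'a set" and F0 E :: "'a set set"
  assumes "weakly_4_connected H0 F0"
    and "expansion H0 F0 G E"
  shows "three_connected G E \<and>
         (\<not> prism G E \<longrightarrow>
            (\<forall>A B. separation G E A B \<and> nontrivial_sep G A B \<and> sep_order A B = 3 \<longrightarrow>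
               (degenerate G E A B \<longleftrightarrow> \<not> degenerate G E B A)))"
proof -
  have I: "Inv G E" using expansion_Inv[OF w4_Inv[OF assms(1)] assms(2)] .
  have tc: "three_connected G E" using I unfolding Inv_def by simp
  have g: "graph G E" using tc_graph[OF tc] .
  have fG: "finite G" using graph_fin[OF g] .
  have main: "degenerate G E A B \<longleftrightarrow> \<not> degenerate G E B A"
    if sep: "separation G E A B" and nt: "nontrivial_sep G A B" and o: "sep_order A B = 3" for A B
  proof -
    have o3: "card (A \<inter> B) = 3" using o unfolding sep_order_def .
    have sep2: "separation G E B A" using sep_sym[OF sep] .
    have nt2: "nontrivial_sep G B A" using nt_sym[OF nt] .
    have o3': "card (B \<inter> A) = 3" using o3 by (simp add: Int_commute)
    have disj: "edges_in E A \<le> card (A - B) + 3 \<or> edges_in E B \<le> card (B - A) + 3"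
      using I sep nt o unfolding Inv_def by blast
    show ?thesis
    proof
      assume d: "degenerate G E A B"
      show "\<not> degenerate G E B A"
      proof
        assume d2: "degenerate G E B A"
        have "edges_in E A \<le> card (A - B) + 3" using B1[OF g fG d] .
        moreover have "edges_in E B \<le> card (B - A) + 3" using B1[OF g fG d2] .
        ultimately show False using B3[OF tc sep nt o3] by blast
      qed
    next
      assume nd: "\<not> degenerate G E B A"
      have "\<not> edges_in E B \<le> card (B - A) + 3" using B2[OF tc sep2 nt2 o3'] nd by blast
      then have "edges_in E A \<le> card (A - B) + 3" using disj by blast
      then show "degenerate G E A B" using B2[OF tc sep nt o3] by blast
    qed
  qed
  show ?thesis using tc main by blast
qed

end
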